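(* Fix $m\geq1$ and $\lambda_1,\dots,\lambda_m\in(0,1)$. Let $U\subseteq\mathbb{C}^m$ be an open neighbourhood of $0$ and $p:U\to\mathbb{R}$ a strictly plurisubharmonic $C^\infty$ function with $p(0)=0$ and $\nabla p(0)=0$. Then there exist $\epsilon>0$ and a strictly plurisubharmonic $C^\infty$ function $q:U\setminus\{0\}\to\mathbb{R}$ which agrees with $p$ outside some neighbourhood of $0$ in $U$ and agrees with $\epsilon r_\lambda^2$ on some smaller punctured neighbourhood of $0$.
   Context: $r_\lambda:\mathbb{C}^m\setminus\{0\}\to(0,\infty)$ is the unique function with $r_\lambda=1$ on the unit sphere $|z_1|^2+\dots+|z_m|^2=1$ and $r_\lambda(e^{\lambda_1s}z_1,\dots,e^{\lambda_ms}z_m)=e^s\,r_\lambda(z_1,\dots,z_m)$ for all $s\in\mathbb{R}$ (each orbit of this flow meets the unit sphere exactly once). It is the radius function of the Kähler cone structure on $\mathbb{C}^m\setminus\{0\}$ obtained by deforming the standard Sasakian structure of $S^{2m-1}$ along the Reeb-type vector field $i\sum_a\lambda_a(z_a\partial_{z_a}-\bar z_a\partial_{\bar z_a})$. A $C^\infty$ function $f$ is strictly plurisubharmonic if $dd^cf(v,Jv)>0$ for all nonzero tangent vectors $v$. *)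

theory Defs
  imports "HOL-Analysis.Analysis"
begin

coinductive smooth_on :: "'a::real_normed_vector set \<Rightarrow> ('a \<Rightarrow> real) \<Rightarrow> bool"
  for U where
  "f differentiable_on U \<Longrightarrow>
   (\<forall>v. smooth_on U (\<lambda>x. frechet_derivative f (at x) v)) \<Longrightarrow> smooth_on U f"

definition hess :: "('a::real_normed_vector \<Rightarrow> real) \<Rightarrow> 'a \<Rightarrow> 'a \<Rightarrow> 'a \<Rightarrow> real" where
  "hess f x v w = frechet_derivative (\<lambda>y. frechet_derivative f (at y) v) (at x) w"

definition Jc :: "complex ^ 'm \<Rightarrow> complex ^ 'm" where
  "Jc v = (\<chi> a. \<i> * v $ a)"

text \<open>Strict plurisubharmonicity: dd^c f (v, J v) > 0 for v nonzero; for real C^2 f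
  one has dd^c f (v, Jv) = D^2 f(v,v) + D^2 f(Jv,Jv) (Levi form up to a positive factor).\<close>
definition strictly_psh_on :: "(complex ^ 'm) set \<Rightarrow> (complex ^ 'm \<Rightarrow> real) \<Rightarrow> bool" where
  "strictly_psh_on U f \<longleftrightarrow>
     (\<forall>x\<in>U. \<forall>v. v \<noteq> 0 \<longrightarrow> hess f x v v + hess f x (Jc v) (Jc v) > 0)"

definition lflow :: "('m \<Rightarrow> real) \<Rightarrow> real \<Rightarrow> complex ^ 'm \<Rightarrow> complex ^ 'm" where
  "lflow lam s z = (\<chi> a. complex_of_real (exp (lam a * s)) * z $ a)"

definition r_lambda :: "('m \<Rightarrow> real) \<Rightarrow> complex ^ 'm \<Rightarrow> real" where
  "r_lambda lam = (THE r. r 0 = 0 \<and> (\<forall>z. z \<noteq> 0 \<longrightarrow> r z > 0) \<and>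
       (\<forall>z. norm z = 1 \<longrightarrow> r z = 1) \<and>
       (\<forall>s z. z \<noteq> 0 \<longrightarrow> r (lflow lam s z) = exp s * r z))"

end

theory Submission
  imports Defs "HOL-Real_Asymp.Real_Asymp"
begin

lemma frechet_derivative_local:
  assumes "open V" "x \<in> V" "\<And>y. y \<in> V \<Longrightarrow> f y = g y"
  shows "frechet_derivative f (at x) = frechet_derivative g (at x)"
proof -
  have "(f has_derivative D) (at x) \<longleftrightarrow> (g has_derivative D) (at x)" for D
    using has_derivative_transform_within_open[where f=f and f'=D and x=x and t=UNIV and s=V and g=g]
      has_derivative_transform_within_open[where f=g and f'=D and x=x and t=UNIV and s=V and g=f] assms
    by metis
  then show ?thesis unfolding frechet_derivative_def by simp
qed

lemma hess_local:
  assumes "open V" "x \<in> V" "\<And>y. y \<in> V \<Longrightarrow> f y = g y"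
  shows "hess f x = hess g x"
proof -
  have "\<And>y. y \<in> V \<Longrightarrow> frechet_derivative f (at y) = frechet_derivative g (at y)"
    by (rule frechet_derivative_local[of V _ f g, OF assms(1) _ assms(3)])
  then show ?thesis unfolding hess_def
  proof (intro ext)
    fix v w
    assume fd: "\<And>y. y \<in> V \<Longrightarrow> frechet_derivative f (at y) = frechet_derivative g (at y)"
    have "frechet_derivative (\<lambda>y. frechet_derivative f (at y) v) (at x) =
          frechet_derivative (\<lambda>y. frechet_derivative g (at y) v) (at x)"
      by (rule frechet_derivative_local[OF assms(1,2)]) (simp add: fd)
    then show "frechet_derivative (\<lambda>y. frechet_derivative f (at y) v) (at x) w =
          frechet_derivative (\<lambda>y. frechet_derivative g (at y) v) (at x) w" by simp
  qed
qed

lemma smooth_onD1: "smooth_on U f \<Longrightarrow> f differentiable_on U"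
  by (erule smooth_on.cases) auto

lemma smooth_onD2: "smooth_on U f \<Longrightarrow> smooth_on U (\<lambda>x. frechet_derivative f (at x) v)"
  by (erule smooth_on.cases) auto

lemma smooth_on_at: "smooth_on U f \<Longrightarrow> open U \<Longrightarrow> x \<in> U \<Longrightarrow> f differentiable (at x)"
  using smooth_onD1 differentiable_on_eq_differentiable_at by blast

lemma smooth_on_has_derivative: "smooth_on U f \<Longrightarrow> open U \<Longrightarrow> x \<in> U \<Longrightarrow>
   (f has_derivative frechet_derivative f (at x)) (at x)"
  using smooth_on_at frechet_derivative_works by blast

lemma smooth_on_cont: "smooth_on U f \<Longrightarrow> open U \<Longrightarrow> continuous_on U f"
  using smooth_onD1 differentiable_imp_continuous_on by blast

lemma smooth_on_by_class:
  assumes "open U" "P f"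
    and step: "\<And>g. P g \<Longrightarrow> g differentiable_on U \<and>
        (\<forall>v. \<exists>h. P h \<and> (\<forall>x\<in>U. frechet_derivative g (at x) v = h x))"
  shows "smooth_on U f"
proof -
  let ?X = "\<lambda>g. \<exists>h. P h \<and> (\<forall>x\<in>U. g x = h x)"
  have "?X f" using assms(2) by blast
  then show ?thesis
  proof (coinduction arbitrary: f rule: smooth_on.coinduct)
    case (smooth_on g)
    then obtain h where h: "P h" "\<forall>x\<in>U. g x = h x" by blast
    have dh: "h differentiable_on U" using step[OF h(1)] by blast
    have dg: "g differentiable_on U"
      unfolding differentiable_on_eq_differentiable_at[OF assms(1)]
    proof
      fix x assume x: "x \<in> U"
      then obtain D where "(h has_derivative D) (at x)"
        using dh assms(1) by (auto simp: differentiable_on_eq_differentiable_at differentiable_def)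
      then have "(g has_derivative D) (at x)"
        by (rule has_derivative_transform_within_open[OF _ assms(1) x]) (use h(2) in auto)
      then show "g differentiable at x" by (auto simp: differentiable_def)
    qed
    have fd: "frechet_derivative g (at x) = frechet_derivative h (at x)" if "x \<in> U" for x
      using frechet_derivative_local[OF assms(1) that] h(2) by blast
    have "\<forall>v. ?X (\<lambda>x. frechet_derivative g (at x) v)"
    proof
      fix v
      obtain k where "P k" "\<forall>x\<in>U. frechet_derivative h (at x) v = k x" using step[OF h(1)] by blast
      then show "?X (\<lambda>x. frechet_derivative g (at x) v)" using fd by auto
    qed
    then show ?case using dg by blast
  qed
qed

inductive_set salg :: "('a \<Rightarrow> real) set \<Rightarrow> ('a \<Rightarrow> real) set" for B where
  sconst: "(\<lambda>x. c) \<in> salg B"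
| sbase: "b \<in> B \<Longrightarrow> b \<in> salg B"
| sadd: "f \<in> salg B \<Longrightarrow> g \<in> salg B \<Longrightarrow> (\<lambda>x. f x + g x) \<in> salg B"
| smult: "f \<in> salg B \<Longrightarrow> g \<in> salg B \<Longrightarrow> (\<lambda>x. f x * g x) \<in> salg B"

lemma salg_diff: "f \<in> salg B \<Longrightarrow> g \<in> salg B \<Longrightarrow> (\<lambda>x. f x - g x) \<in> salg B"
proof -
  assume "f \<in> salg B" "g \<in> salg B"
  then have "(\<lambda>x. f x + (\<lambda>x. -1) x * g x) \<in> salg B" by (intro sadd smult sconst)
  then show ?thesis by simp
qed

lemma salg_cmult: "f \<in> salg B \<Longrightarrow> (\<lambda>x. c * f x) \<in> salg B"
  using smult[OF sconst] by blast

lemma salg_sum: "finite A \<Longrightarrow> (\<And>a. a \<in> A \<Longrightarrow> (\<lambda>x. f a x) \<in> salg B) \<Longrightarrow> (\<lambda>x. \<Sum>a\<in>A. f a x) \<in> salg B"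
proof (induction A rule: finite_induct)
  case empty then show ?case using sconst by simp
next
  case (insert a A) then show ?case using sadd[of "f a" B "\<lambda>x. \<Sum>a\<in>A. f a x"] by simp
qed

lemma salg_smooth:
  fixes B :: "('a::real_normed_vector \<Rightarrow> real) set"
  assumes U: "open U"
    and B: "\<And>b. b \<in> B \<Longrightarrow> b differentiable_on U \<and>
               (\<forall>v. \<exists>g\<in>salg B. \<forall>x\<in>U. frechet_derivative b (at x) v = g x)"
    and f: "f \<in> salg B"
  shows "smooth_on U f"
proof -
  have closed: "g differentiable_on U \<and> (\<forall>v. \<exists>h\<in>salg B. \<forall>x\<in>U. frechet_derivative g (at x) v = h x)"
    if "g \<in> salg B" for g
    using that
  proof (induction g rule: salg.induct)
    case (sconst c)
    have "(\<lambda>x. c) differentiable_on U" by simp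
    moreover have "\<forall>v. \<exists>h\<in>salg B. \<forall>x\<in>U. frechet_derivative (\<lambda>x. c) (at x) v = h x"
    proof
      fix v show "\<exists>h\<in>salg B. \<forall>x\<in>U. frechet_derivative (\<lambda>x. c) (at x) v = h x"
        by (rule bexI[of _ "\<lambda>x. 0"]) (simp_all add: salg.sconst)
    qed
    ultimately show ?case by blast
  next
    case (sbase b)
    then show ?case using B by blast
  next
    case (sadd f g)
    have "(\<lambda>x. f x + g x) differentiable_on U" using sadd by (auto intro: differentiable_on_add)
    moreover have "\<exists>h\<in>salg B. \<forall>x\<in>U. frechet_derivative (\<lambda>x. f x + g x) (at x) v = h x" for v
    proof -
      obtain hf where hf: "hf \<in> salg B" "\<forall>x\<in>U. frechet_derivative f (at x) v = hf x" using sadd by blast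
      obtain hg where hg: "hg \<in> salg B" "\<forall>x\<in>U. frechet_derivative g (at x) v = hg x" using sadd by blast
      have "frechet_derivative (\<lambda>x. f x + g x) (at x) v = hf x + hg x" if "x \<in> U" for x
      proof -
        have "f differentiable at x" "g differentiable at x" using sadd that U
          by (auto simp: differentiable_on_eq_differentiable_at)
        then have "((\<lambda>x. f x + g x) has_derivative (\<lambda>v. frechet_derivative f (at x) v + frechet_derivative g (at x) v)) (at x)"
          by (intro has_derivative_add) (auto simp: frechet_derivative_works)
        then have "frechet_derivative (\<lambda>x. f x + g x) (at x) = (\<lambda>v. frechet_derivative f (at x) v + frechet_derivative g (at x) v)"
          by (rule frechet_derivative_at[symmetric])
        then show ?thesis using hf hg that by simp
      qed
      then have "\<forall>x\<in>U. frechet_derivative (\<lambda>x. f x + g x) (at x) v = (\<lambda>x. hf x + hg x) x" by simp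
      then show ?thesis using salg.sadd[OF hf(1) hg(1)] by (rule bexI[where x="\<lambda>x. hf x + hg x"])
    qed
    ultimately show ?case by blast
  next
    case (smult f g)
    have "(\<lambda>x. f x * g x) differentiable_on U" using smult by (auto intro: differentiable_on_mult)
    moreover have "\<exists>h\<in>salg B. \<forall>x\<in>U. frechet_derivative (\<lambda>x. f x * g x) (at x) v = h x" for v
    proof -
      obtain hf where hf: "hf \<in> salg B" "\<forall>x\<in>U. frechet_derivative f (at x) v = hf x" using smult by blast
      obtain hg where hg: "hg \<in> salg B" "\<forall>x\<in>U. frechet_derivative g (at x) v = hg x" using smult by blast
      have "frechet_derivative (\<lambda>x. f x * g x) (at x) v = f x * hg x + hf x * g x" if "x \<in> U" for x
      proof -
        have "f differentiable at x" "g differentiable at x" using smult that U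
          by (auto simp: differentiable_on_eq_differentiable_at)
        then have "((\<lambda>x. f x * g x) has_derivative (\<lambda>v. f x * frechet_derivative g (at x) v + frechet_derivative f (at x) v * g x)) (at x)"
          by (intro has_derivative_mult) (auto simp: frechet_derivative_works)
        then have "frechet_derivative (\<lambda>x. f x * g x) (at x) = (\<lambda>v. f x * frechet_derivative g (at x) v + frechet_derivative f (at x) v * g x)"
          by (rule frechet_derivative_at[symmetric])
        then show ?thesis using hf hg that by simp
      qed
      moreover have "(\<lambda>x. f x * hg x + hf x * g x) \<in> salg B"
        using smult hf hg by (intro salg.sadd salg.smult) auto
      ultimately show ?thesis by (intro bexI[where x="\<lambda>x. f x * hg x + hf x * g x"]) auto
    qed
    ultimately show ?case by blast
  qed
  show ?thesis
    by (rule smooth_on_by_class[where P="\<lambda>g. g \<in> salg B", OF U f]) (use closed in blast)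
qed

lemma salg_mono: assumes "B \<subseteq> B'" "f \<in> salg B" shows "f \<in> salg B'"
  using assms(2) by (induction f rule: salg.induct) (use assms(1) in \<open>auto intro: salg.intros\<close>)

lemma smooth_salg:
  fixes B :: "('a::real_normed_vector \<Rightarrow> real) set"
  assumes U: "open U" and B: "\<And>b. b \<in> B \<Longrightarrow> smooth_on U b" and f: "f \<in> salg B"
  shows "smooth_on U f"
proof (rule salg_smooth[OF U, of "{g. smooth_on U g}"])
  show "f \<in> salg {g. smooth_on U g}" using salg_mono[OF _ f] B by blast
next
  fix b assume "b \<in> {g. smooth_on U g}"
  then have b: "smooth_on U b" by simp
  show "b differentiable_on U \<and> (\<forall>v. \<exists>g\<in>salg {g. smooth_on U g}. \<forall>x\<in>U. frechet_derivative b (at x) v = g x)"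
    using smooth_onD1[OF b] smooth_onD2[OF b] by (auto intro!: sbase)
qed

lemma smooth_const: "open U \<Longrightarrow> smooth_on U (\<lambda>x. c)"
  by (rule smooth_salg[of U "{}"]) (auto intro: sconst)

lemma smooth_add: "open U \<Longrightarrow> smooth_on U f \<Longrightarrow> smooth_on U g \<Longrightarrow> smooth_on U (\<lambda>x. f x + g x)"
  by (rule smooth_salg[of U "{f,g}"]) (auto intro!: sadd[OF sbase sbase])

lemma smooth_mult: "open U \<Longrightarrow> smooth_on U f \<Longrightarrow> smooth_on U g \<Longrightarrow> smooth_on U (\<lambda>x. f x * g x)"
  by (rule smooth_salg[of U "{f,g}"]) (auto intro!: smult[OF sbase sbase])

lemma smooth_diff: "open U \<Longrightarrow> smooth_on U f \<Longrightarrow> smooth_on U g \<Longrightarrow> smooth_on U (\<lambda>x. f x - g x)"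
  by (rule smooth_salg[of U "{f,g}"]) (auto intro!: salg_diff[OF sbase sbase])

lemma smooth_cmult: "open U \<Longrightarrow> smooth_on U f \<Longrightarrow> smooth_on U (\<lambda>x. c * f x)"
  by (rule smooth_salg[of U "{f}"]) (auto intro!: salg_cmult[OF sbase])

lemma smooth_subset:
  assumes "smooth_on U f" "V \<subseteq> U" shows "smooth_on V f"
proof -
  have "smooth_on U f" by fact
  then show ?thesis
  proof (coinduction arbitrary: f rule: smooth_on.coinduct)
    case (smooth_on f)
    then show ?case using smooth_onD1[OF smooth_on] smooth_onD2[OF smooth_on] differentiable_on_subset assms(2)
      by blast
  qed
qed

lemma smooth_local:
  assumes U: "open U"
    and loc: "\<And>x. x \<in> U \<Longrightarrow> \<exists>V g. open V \<and> x \<in> V \<and> smooth_on V g \<and> (\<forall>y\<in>V. f y = g y)"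
  shows "smooth_on U f"
proof (rule smooth_on_by_class[where P="\<lambda>h. \<forall>x\<in>U. \<exists>V g. open V \<and> x \<in> V \<and> smooth_on V g \<and> (\<forall>y\<in>V. h y = g y)", OF U])
  show "\<forall>x\<in>U. \<exists>V g. open V \<and> x \<in> V \<and> smooth_on V g \<and> (\<forall>y\<in>V. f y = g y)" using loc by blast
next
  fix h assume P: "\<forall>x\<in>U. \<exists>V g. open V \<and> x \<in> V \<and> smooth_on V g \<and> (\<forall>y\<in>V. h y = g y)"
  have "h differentiable at x" if x: "x \<in> U" for x
  proof -
    obtain V g where V: "open V" "x \<in> V" "smooth_on V g" "\<forall>y\<in>V. h y = g y" using P x by blast
    have "(g has_derivative frechet_derivative g (at x)) (at x)" using smooth_on_has_derivative V by blast
    then have "(h has_derivative frechet_derivative g (at x)) (at x)"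
      by (rule has_derivative_transform_within_open[OF _ V(1,2)]) (use V(4) in auto)
    then show ?thesis by (auto simp: differentiable_def)
  qed
  then have "h differentiable_on U" using U by (simp add: differentiable_on_eq_differentiable_at)
  moreover have D2: "\<forall>x\<in>U. \<exists>V g. open V \<and> x \<in> V \<and> smooth_on V g \<and> (\<forall>y\<in>V. frechet_derivative h (at y) v = g y)" for v
  proof
    fix x assume x: "x \<in> U"
    obtain V g where V: "open V" "x \<in> V" "smooth_on V g" "\<forall>y\<in>V. h y = g y" using P x by blast
    have "\<forall>y\<in>V. frechet_derivative h (at y) v = frechet_derivative g (at y) v"
      using frechet_derivative_local[OF V(1) _ , of _ h g] V(4) by auto
    then show "\<exists>V g. open V \<and> x \<in> V \<and> smooth_on V g \<and> (\<forall>y\<in>V. frechet_derivative h (at y) v = g y)"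
      using V smooth_onD2[OF V(3)] by blast
  qed
  ultimately show "h differentiable_on U \<and> (\<forall>v. \<exists>h'. (\<forall>x\<in>U. \<exists>V g. open V \<and> x \<in> V \<and> smooth_on V g \<and> (\<forall>y\<in>V. h' y = g y))
        \<and> (\<forall>x\<in>U. frechet_derivative h (at x) v = h' x))"
  proof (intro conjI allI)
    fix v
    show "\<exists>h'. (\<forall>x\<in>U. \<exists>V g. open V \<and> x \<in> V \<and> smooth_on V g \<and> (\<forall>y\<in>V. h' y = g y))
        \<and> (\<forall>x\<in>U. frechet_derivative h (at x) v = h' x)"
      by (rule exI[where x="\<lambda>y. frechet_derivative h (at y) v"]) (use D2[of v] in simp)
  qed blast
qed

lemma smooth_eq_on: "open U \<Longrightarrow> smooth_on U g \<Longrightarrow> (\<And>x. x \<in> U \<Longrightarrow> f x = g x) \<Longrightarrow> smooth_on U f"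
  by (rule smooth_local) blast+

lemma frechet_field: "(f has_field_derivative D) (at y) \<Longrightarrow> frechet_derivative f (at y) v = D * v"
  using frechet_derivative_at[of f "(*) D" y] by (simp add: has_field_derivative_def)

lemma real_frechet_scale:
  fixes k :: "real \<Rightarrow> real"
  assumes "k differentiable at y"
  shows "frechet_derivative k (at y) c = c * frechet_derivative k (at y) 1"
proof -
  have "linear (frechet_derivative k (at y))" using assms by (rule linear_frechet_derivative)
  then have "frechet_derivative k (at y) (c *\<^sub>R 1) = c *\<^sub>R frechet_derivative k (at y) 1"
    by (rule linear_scale)
  then show ?thesis by simp
qed

lemma smooth_compose:
  fixes k :: "real \<Rightarrow> real" and f :: "'a::real_normed_vector \<Rightarrow> real"
  assumes I: "open I" and U: "open U" and k: "smooth_on I k" and f: "smooth_on U f"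
    and fU: "\<And>x. x \<in> U \<Longrightarrow> f x \<in> I"
  shows "smooth_on U (\<lambda>x. k (f x))"
proof (rule salg_smooth[OF U, of "{g. smooth_on U g} \<union> {h. \<exists>k'. smooth_on I k' \<and> h = (\<lambda>x. k' (f x))}"])
  show "(\<lambda>x. k (f x)) \<in> salg ({g. smooth_on U g} \<union> {h. \<exists>k'. smooth_on I k' \<and> h = (\<lambda>x. k' (f x))})"
    using k by (intro sbase) blast
next
  fix b assume b: "b \<in> {g. smooth_on U g} \<union> {h. \<exists>k'. smooth_on I k' \<and> h = (\<lambda>x. k' (f x))}"
  let ?B = "{g. smooth_on U g} \<union> {h. \<exists>k'. smooth_on I k' \<and> h = (\<lambda>x. k' (f x))}"
  show "b differentiable_on U \<and> (\<forall>v. \<exists>g\<in>salg ?B. \<forall>x\<in>U. frechet_derivative b (at x) v = g x)"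
  proof (cases "smooth_on U b")
    case True
    then show ?thesis using smooth_onD1[OF True] smooth_onD2[OF True] by (auto intro!: sbase)
  next
    case False
    then obtain k' where k': "smooth_on I k'" and bk: "b = (\<lambda>x. k' (f x))" using b by blast
    have dk: "k' differentiable at y" if "y \<in> I" for y using smooth_on_at[OF k' I that] .
    have df: "f differentiable at x" if "x \<in> U" for x using smooth_on_at[OF f U that] .
    have hd: "((\<lambda>x. k' (f x)) has_derivative (\<lambda>v. frechet_derivative k' (at (f x)) (frechet_derivative f (at x) v))) (at x)"
      if x: "x \<in> U" for x
    proof -
      have "((k' \<circ> f) has_derivative (frechet_derivative k' (at (f x)) \<circ> frechet_derivative f (at x))) (at x)"
        by (rule diff_chain_at) (use dk[OF fU[OF x]] df[OF x] in \<open>auto simp: frechet_derivative_works\<close>)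
      then show ?thesis by (simp add: o_def)
    qed
    have "b differentiable_on U" unfolding bk differentiable_on_eq_differentiable_at[OF U]
      using hd by (auto simp: differentiable_def)
    moreover have "\<exists>g\<in>salg ?B. \<forall>x\<in>U. frechet_derivative b (at x) v = g x" for v
    proof -
      have eq: "frechet_derivative b (at x) v = frechet_derivative f (at x) v * (\<lambda>y. frechet_derivative k' (at y) 1) (f x)"
        if x: "x \<in> U" for x
      proof -
        have "frechet_derivative b (at x) = (\<lambda>v. frechet_derivative k' (at (f x)) (frechet_derivative f (at x) v))"
          unfolding bk by (rule frechet_derivative_at[OF hd[OF x], symmetric])
        then have "frechet_derivative b (at x) v = frechet_derivative k' (at (f x)) (frechet_derivative f (at x) v)" by simp
        also have "\<dots> = frechet_derivative f (at x) v * frechet_derivative k' (at (f x)) 1"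
          by (rule real_frechet_scale[OF dk[OF fU[OF x]]])
        finally show ?thesis by simp
      qed
      have s1: "smooth_on U (\<lambda>x. frechet_derivative f (at x) v)" using smooth_onD2[OF f] .
      have s2: "smooth_on I (\<lambda>y. frechet_derivative k' (at y) 1)" using smooth_onD2[OF k'] .
      have "(\<lambda>x. frechet_derivative f (at x) v * (\<lambda>y. frechet_derivative k' (at y) 1) (f x)) \<in> salg ?B"
        apply (rule smult)
         apply (rule sbase) using s1 apply blast
        apply (rule sbase) using s2 apply blast
        done
      then show ?thesis by (rule bexI[rotated]) (use eq in simp)
    qed
    ultimately show ?thesis by blast
  qed
qed

lemma smooth_linear: "bounded_linear L \<Longrightarrow> open U \<Longrightarrow> smooth_on U (L :: 'a::real_normed_vector \<Rightarrow> real)"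
proof (rule salg_smooth[of U "{L}"])
  assume L: "bounded_linear L" and "open U"
  then show "open U" by simp
  show "L \<in> salg {L}" by (rule sbase) simp
  fix b assume "b \<in> {L}"
  then have b: "b = L" by simp
  have fd: "frechet_derivative L (at x) = L" for x
    using frechet_derivative_at[OF bounded_linear_imp_has_derivative[OF L]] by simp
  show "b differentiable_on U \<and> (\<forall>v. \<exists>g\<in>salg {L}. \<forall>x\<in>U. frechet_derivative b (at x) v = g x)"
    using b fd L bounded_linear_imp_differentiable_on sconst by fastforce
qed

lemma salg_exI: "g \<in> salg B \<Longrightarrow> (\<And>x. x \<in> U \<Longrightarrow> F x = g x) \<Longrightarrow> \<exists>h\<in>salg B. \<forall>x\<in>U. F x = h x"
  by blast

lemma field_deriv_differentiable_on:
  assumes "\<And>x. x \<in> S \<Longrightarrow> (f has_field_derivative f' x) (at x)"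
  shows "f differentiable_on S"
  unfolding differentiable_on_def
proof
  fix x assume "x \<in> S"
  then have "(f has_derivative (*) (f' x)) (at x)" using assms by (simp add: has_field_derivative_def)
  then show "f differentiable at x within S"
    by (auto simp: differentiable_def intro: has_derivative_at_withinI)
qed

lemma smooth_exp: "smooth_on UNIV (exp :: real \<Rightarrow> real)"
proof (rule salg_smooth[of UNIV "{exp}"])
  show "exp \<in> salg {exp}" by (rule sbase) simp
  fix b :: "real \<Rightarrow> real" assume "b \<in> {exp}"
  then have b: "b = exp" by simp
  show "b differentiable_on UNIV \<and> (\<forall>v. \<exists>g\<in>salg {exp}. \<forall>x\<in>UNIV. frechet_derivative b (at x) v = g x)"
  proof (intro conjI allI)
    show "b differentiable_on UNIV" unfolding b by (rule field_deriv_differentiable_on) (rule DERIV_exp)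
    fix v
    show "\<exists>g\<in>salg {exp}. \<forall>x\<in>UNIV. frechet_derivative b (at x) v = g x"
    proof (rule salg_exI[where g="\<lambda>x. exp x * v"])
      show "(\<lambda>x. exp x * v) \<in> salg {exp}" by (intro smult sconst) (rule sbase, simp)
      fix x :: real show "frechet_derivative b (at x) v = exp x * v"
        unfolding b by (rule frechet_field) (rule DERIV_exp)
    qed
  qed
qed simp

lemma inverse_frechet: "(x::real) \<noteq> 0 \<Longrightarrow> frechet_derivative inverse (at x) v = (-v) * (inverse x * inverse x)"
proof -
  assume "x \<noteq> 0"
  then have "(inverse has_field_derivative - (inverse x ^ Suc (Suc 0))) (at x)"
    using DERIV_inverse[of x UNIV] by auto
  then have "frechet_derivative inverse (at x) v = - (inverse x ^ Suc (Suc 0)) * v"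
    by (rule frechet_field)
  then show ?thesis by simp
qed

lemma inverse_differentiable_on: "(inverse :: real \<Rightarrow> real) differentiable_on {0<..}"
  by (rule field_deriv_differentiable_on) (rule DERIV_inverse, simp)

lemma smooth_inverse: "smooth_on {0<..} (inverse :: real \<Rightarrow> real)"
proof (rule salg_smooth[of "{0<..}" "{inverse}"])
  show "inverse \<in> salg {inverse}" by (rule sbase) simp
  fix b :: "real \<Rightarrow> real" assume "b \<in> {inverse}"
  then have b: "b = inverse" by simp
  show "b differentiable_on {0<..} \<and> (\<forall>v. \<exists>g\<in>salg {inverse}. \<forall>x\<in>{0<..}. frechet_derivative b (at x) v = g x)"
  proof (intro conjI allI)
    show "b differentiable_on {0<..}" unfolding b by (rule inverse_differentiable_on)
    fix v
    show "\<exists>g\<in>salg {inverse}. \<forall>x\<in>{0<..}. frechet_derivative b (at x) v = g x"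
    proof (rule salg_exI[where g="\<lambda>x. (-v) * (inverse x * inverse x)"])
      show "(\<lambda>x. (-v) * (inverse x * inverse x)) \<in> salg {inverse}"
        by (intro smult sconst) (rule sbase, simp)+
      fix x :: real assume "x \<in> {0<..}"
      then show "frechet_derivative b (at x) v = (-v) * (inverse x * inverse x)"
        unfolding b by (intro inverse_frechet) simp
    qed
  qed
qed simp

lemma smooth_ln: "smooth_on {0<..} (ln :: real \<Rightarrow> real)"
proof (rule salg_smooth[of "{0<..}" "{ln, inverse}"])
  show "ln \<in> salg {ln, inverse}" by (rule sbase) simp
  fix b :: "real \<Rightarrow> real" assume b: "b \<in> {ln, inverse}"
  show "b differentiable_on {0<..} \<and> (\<forall>v. \<exists>g\<in>salg {ln, inverse}. \<forall>x\<in>{0<..}. frechet_derivative b (at x) v = g x)"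
  proof (cases "b = ln")
    case True
    show ?thesis
    proof (intro conjI allI)
      show "b differentiable_on {0<..}" unfolding True
        by (rule field_deriv_differentiable_on) (rule DERIV_ln, simp)
      fix v
      show "\<exists>g\<in>salg {ln, inverse}. \<forall>x\<in>{0<..}. frechet_derivative b (at x) v = g x"
      proof (rule salg_exI[where g="\<lambda>x. inverse x * v"])
        show "(\<lambda>x. inverse x * v) \<in> salg {ln, inverse}" by (intro smult sconst) (rule sbase, simp)
        fix x :: real assume "x \<in> {0<..}"
        then show "frechet_derivative b (at x) v = inverse x * v"
          unfolding True by (intro frechet_field DERIV_ln) simp
      qed
    qed
  next
    case False
    then have b: "b = inverse" using b by simp
    show ?thesis
    proof (intro conjI allI)
      show "b differentiable_on {0<..}" unfolding b by (rule inverse_differentiable_on)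
      fix v
      show "\<exists>g\<in>salg {ln, inverse}. \<forall>x\<in>{0<..}. frechet_derivative b (at x) v = g x"
      proof (rule salg_exI[where g="\<lambda>x. (-v) * (inverse x * inverse x)"])
        show "(\<lambda>x. (-v) * (inverse x * inverse x)) \<in> salg {ln, inverse}"
          by (intro smult sconst) (rule sbase, simp)+
        fix x :: real assume "x \<in> {0<..}"
        then show "frechet_derivative b (at x) v = (-v) * (inverse x * inverse x)"
          unfolding b by (intro inverse_frechet) simp
      qed
    qed
  qed
qed simp

lemma smooth_inverse_comp: "open U \<Longrightarrow> smooth_on U f \<Longrightarrow> (\<And>x. x \<in> U \<Longrightarrow> f x > 0) \<Longrightarrow> smooth_on U (\<lambda>x. inverse (f x))"
  by (rule smooth_compose[OF _ _ smooth_inverse]) auto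

lemma smooth_ln_comp: "open U \<Longrightarrow> smooth_on U f \<Longrightarrow> (\<And>x. x \<in> U \<Longrightarrow> f x > 0) \<Longrightarrow> smooth_on U (\<lambda>x. ln (f x))"
  by (rule smooth_compose[OF _ _ smooth_ln]) auto

lemma smooth_exp_comp: "open U \<Longrightarrow> smooth_on U f \<Longrightarrow> smooth_on U (\<lambda>x. exp (f x))"
  by (rule smooth_compose[OF _ _ smooth_exp]) auto

lemma exp_ge_pow: "0 \<le> x \<Longrightarrow> x^n / fact n \<le> exp (x::real)"
proof -
  assume x: "0 \<le> x"
  have "(\<Sum>i\<in>{n}. x^i / fact i) \<le> (\<Sum>i. x^i / fact i)"
    by (rule sum_le_suminf) (use summable_exp[of x] x in \<open>auto simp: divide_inverse mult.commute\<close>)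
  also have "\<dots> = exp x"
    using sums_unique[OF exp_converges[of x]] by (simp add: divide_inverse mult.commute)
  finally show ?thesis by simp
qed
lemma mono_deriv_nonneg:
  fixes f :: "real \<Rightarrow> real"
  assumes "mono f" "f differentiable at x" shows "0 \<le> deriv f x"
proof -
  have "(f has_real_derivative deriv f x) (at x)" using assms(2) DERIV_deriv_iff_real_differentiable by blast
  then have "((\<lambda>y. (f y - f x)/(y - x)) \<longlongrightarrow> deriv f x) (at x)" by (simp add: has_field_derivative_iff)
  moreover have "\<forall>\<^sub>F y in at x. 0 \<le> (f y - f x)/(y - x)"
  proof (rule always_eventually, rule allI)
    fix y
    show "0 \<le> (f y - f x)/(y - x)"
    proof (cases "x \<le> y")
      case True then have "f x \<le> f y" using assms(1) by (simp add: monoD)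
      then show ?thesis using True by simp
    next
      case False then have "f y \<le> f x" using assms(1) by (simp add: monoD)
      then show ?thesis using False by (simp add: divide_nonpos_neg)
    qed
  qed
  ultimately show ?thesis by (rule tendsto_lowerbound) simp
qed

definition hk :: "nat \<Rightarrow> real \<Rightarrow> real" where
  "hk k t = (if t > 0 then exp (-1/t) * inverse t ^ k else 0)"

lemma hk_nonneg: "hk k t \<ge> 0" by (simp add: hk_def)
lemma hk_pos: "t > 0 \<Longrightarrow> hk k t > 0" by (simp add: hk_def)
lemma hk_zero: "t \<le> 0 \<Longrightarrow> hk k t = 0" by (simp add: hk_def)

lemma hk_bound: "\<bar>hk k t / t\<bar> \<le> fact (k+2) * \<bar>t\<bar>"
proof (cases "t > 0")
  case True
  define X where "X = 1/t"
  have X: "X > 0" using True by (simp add: X_def)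
  have e: "X^(k+2) / fact (k+2) \<le> exp X" using exp_ge_pow[of X "k+2"] X by simp
  have "hk k t / t = X^(k+1) / exp X"
    using True by (simp add: hk_def X_def exp_minus field_simps power_Suc)
  also have "\<dots> \<le> X^(k+1) / (X^(k+2) / fact (k+2))"
    by (rule divide_left_mono[OF e]) (use X in auto)
  also have "\<dots> = fact (k+2) * t"
    using X True by (simp add: X_def field_simps power_Suc)
  finally show ?thesis using True hk_nonneg[of k t] by simp
next
  case False then have "hk k t = 0" by (simp add: hk_def)
  then show ?thesis by simp
qed

lemma hk_deriv0: "(hk k has_real_derivative 0) (at 0)"
proof -
  have "((\<lambda>y. (hk k y - hk k 0) / (y - 0)) \<longlongrightarrow> 0) (at 0)"
  proof (rule Lim_null_comparison)
    show "\<forall>\<^sub>F x in at 0. norm ((hk k x - hk k 0) / (x - 0)) \<le> fact (k+2) * \<bar>x\<bar>"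
      using hk_bound[of k] by (simp add: hk_def)
    show "((\<lambda>x. fact (k+2) * \<bar>x\<bar>) \<longlongrightarrow> (0::real)) (at 0)"
      by (rule tendsto_eq_intros refl)+ simp
  qed
  then show ?thesis by (simp add: has_field_derivative_iff)
qed

lemma inv_pow_deriv: "(t::real) \<noteq> 0 \<Longrightarrow> ((\<lambda>t. inverse t ^ k) has_real_derivative (- real k * inverse t ^ (k+1))) (at t)"
proof (induction k)
  case 0 then show ?case by simp
next
  case (Suc k)
  have "((\<lambda>t. inverse t * inverse t ^ k) has_real_derivative
     (- (inverse t ^ Suc (Suc 0))) * inverse t ^ k + (- real k * inverse t ^ (k+1)) * inverse t) (at t)"
    by (rule DERIV_mult[OF DERIV_inverse[OF Suc.prems] Suc.IH[OF Suc.prems]])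
  then show ?case by (simp add: algebra_simps power2_eq_square)
qed
lemma expinv_deriv: "(t::real) \<noteq> 0 \<Longrightarrow> ((\<lambda>t. exp (-1/t)) has_real_derivative exp (-1/t) * inverse t ^ 2) (at t)"
  by (auto intro!: derivative_eq_intros simp: power2_eq_square field_simps)
lemma hk_deriv_pos: "t > 0 \<Longrightarrow> ((\<lambda>t. exp (-1/t) * inverse t ^ k) has_real_derivative (hk (k+2) t - real k * hk (k+1) t)) (at t)"
proof -
  assume t: "t > 0"
  have "((\<lambda>t. exp (-1/t) * inverse t ^ k) has_real_derivative
     exp (-1/t) * inverse t ^ 2 * inverse t ^ k + (- real k * inverse t ^ (k+1)) * exp (-1/t)) (at t)"
    by (rule DERIV_mult[OF expinv_deriv inv_pow_deriv]) (use t in auto)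
  then show ?thesis using t by (simp add: hk_def algebra_simps power_add power2_eq_square)
qed

lemma hk_deriv: "(hk k has_real_derivative (hk (k+2) t - real k * hk (k+1) t)) (at t)"
proof -
  consider "t > 0" | "t < 0" | "t = 0" by linarith
  then show ?thesis
  proof cases
    case 1
    have "((\<lambda>t. exp (-1/t) * inverse t ^ k) has_real_derivative (hk (k+2) t - real k * hk (k+1) t)) (at t)"
      using 1 by (rule hk_deriv_pos)
    then show ?thesis
      by (rule has_field_derivative_transform_within_open[where S="{0<..}"]) (use 1 in \<open>auto simp: hk_def\<close>)
  next
    case 2
    have "((\<lambda>t. 0) has_real_derivative (hk (k+2) t - real k * hk (k+1) t)) (at t)"
      using 2 by (simp add: hk_def)
    then show ?thesis
      by (rule has_field_derivative_transform_within_open[where S="{..<0}"]) (use 2 in \<open>auto simp: hk_def\<close>)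
  next
    case 3
    then show ?thesis using hk_deriv0[of k] by (simp add: hk_def)
  qed
qed

lemma smooth_hk: "smooth_on UNIV (hk k)"
proof (rule salg_smooth[of UNIV "range hk"])
  show "hk k \<in> salg (range hk)" by (rule sbase) simp
  fix b assume "b \<in> range hk"
  then obtain j where b: "b = hk j" by blast
  show "b differentiable_on UNIV \<and> (\<forall>v. \<exists>g\<in>salg (range hk). \<forall>x\<in>UNIV. frechet_derivative b (at x) v = g x)"
  proof (intro conjI allI)
    show "b differentiable_on UNIV" unfolding b by (rule field_deriv_differentiable_on) (rule hk_deriv)
    fix v
    show "\<exists>g\<in>salg (range hk). \<forall>x\<in>UNIV. frechet_derivative b (at x) v = g x"
    proof (rule salg_exI[where g="\<lambda>x. (hk (j+2) x + (- real j) * hk (j+1) x) * v"])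
      show "(\<lambda>x. (hk (j+2) x + (- real j) * hk (j+1) x) * v) \<in> salg (range hk)"
        by (intro smult sadd sconst sbase) auto
      fix x :: real
      show "frechet_derivative b (at x) v = (hk (j+2) x + (- real j) * hk (j+1) x) * v"
        unfolding b using frechet_field[OF hk_deriv[of j x]] by simp
    qed
  qed
qed simp

definition hb :: "real \<Rightarrow> real" where "hb = hk 0"

lemma hb_mono: "mono hb"
proof (rule monoI)
  fix x y :: real assume "x \<le> y"
  have "\<And>t. (hb has_real_derivative (hk (0+2) t - real 0 * hk (0+1) t)) (at t)"
    unfolding hb_def by (rule hk_deriv)
  then show "hb x \<le> hb y"
    by (intro DERIV_nonneg_imp_nondecreasing[OF \<open>x \<le> y\<close>]) (use hk_nonneg in auto)
qed

definition sig :: "real \<Rightarrow> real" where "sig x = hb x / (hb x + hb (1 - x))"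

lemma hb_den_pos: "hb x + hb (1 - x) > 0"
  using hk_pos[of x 0] hk_pos[of "1-x" 0] hk_nonneg[of 0 x] hk_nonneg[of 0 "1-x"] unfolding hb_def
  by (cases "x > 0") auto

lemma sig_0: "x \<le> 0 \<Longrightarrow> sig x = 0" by (simp add: sig_def hb_def hk_zero)
lemma sig_1: "x \<ge> 1 \<Longrightarrow> sig x = 1" using hb_den_pos[of x] by (simp add: sig_def hb_def hk_zero)
lemma sig_bounds: "0 \<le> sig x" "sig x \<le> 1"
  using hb_den_pos[of x] hk_nonneg[of 0 x] hk_nonneg[of 0 "1-x"] by (auto simp: sig_def hb_def)

lemma sig_mono: "mono sig"
proof (rule monoI)
  fix x y :: real assume xy: "x \<le> y"
  have a: "hb x \<le> hb y" using hb_mono xy by (simp add: monoD)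
  have b: "hb (1 - y) \<le> hb (1 - x)" using hb_mono xy by (simp add: monoD)
  have p: "hb x \<ge> 0" "hb (1-y) \<ge> 0" using hk_nonneg by (auto simp: hb_def)
  have "hb x * (hb y + hb (1 - y)) \<le> hb y * (hb x + hb (1 - x))"
    using a b p by (simp add: algebra_simps mult_mono)
  then show "sig x \<le> sig y" unfolding sig_def
    using hb_den_pos[of x] hb_den_pos[of y] by (simp add: divide_simps)
qed

lemma smooth_id_real: "smooth_on UNIV (\<lambda>x::real. x)"
  by (rule smooth_linear) (auto intro: bounded_linear_ident)

lemma smooth_affine: "smooth_on UNIV (\<lambda>x::real. a * x + b)"
  by (intro smooth_add smooth_cmult smooth_const smooth_id_real) auto

lemma smooth_sig: "smooth_on UNIV sig"
proof -
  have h: "smooth_on UNIV hb" unfolding hb_def by (rule smooth_hk)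
  have h1: "smooth_on UNIV (\<lambda>x. hb ((-1) * x + 1))"
    by (rule smooth_compose[OF _ _ h smooth_affine]) auto
  have d: "smooth_on UNIV (\<lambda>x. inverse (hb x + hb ((-1) * x + 1)))"
    by (rule smooth_inverse_comp) (use h h1 hb_den_pos in \<open>auto intro: smooth_add\<close>)
  have "smooth_on UNIV (\<lambda>x. hb x * inverse (hb x + hb ((-1) * x + 1)))"
    by (rule smooth_mult[OF _ h d]) simp
  moreover have "sig = (\<lambda>x. hb x * inverse (hb x + hb ((-1) * x + 1)))"
    by (auto simp: sig_def divide_inverse fun_eq_iff)
  ultimately show ?thesis by simp
qed

definition tau :: "real \<Rightarrow> real" where "tau x = sig ((x + 1) / 2)"

lemma tau_0: "x \<le> -1 \<Longrightarrow> tau x = 0" by (simp add: tau_def sig_0)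
lemma tau_1: "x \<ge> 1 \<Longrightarrow> tau x = 1" by (simp add: tau_def sig_1)
lemma tau_bounds: "0 \<le> tau x" "tau x \<le> 1" by (simp_all add: tau_def sig_bounds)
lemma tau_mono: "mono tau"
  by (rule monoI) (auto simp: tau_def intro!: monoD[OF sig_mono] divide_right_mono)

lemma smooth_tau: "smooth_on UNIV tau"
proof -
  have "smooth_on UNIV (\<lambda>x. sig ((1/2) * x + 1/2))"
    by (rule smooth_compose[OF _ _ smooth_sig smooth_affine]) auto
  moreover have "tau = (\<lambda>x. sig ((1/2) * x + 1/2))" by (auto simp: tau_def fun_eq_iff add_divide_distrib)
  ultimately show ?thesis by simp
qed

lemma tau_cont: "continuous_on S tau"
  using smooth_on_cont[OF smooth_tau] continuous_on_subset by blast

definition nu0 :: "real \<Rightarrow> real" where "nu0 y = integral {-2..y} tau"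

lemma nu0_zero: "y \<le> -1 \<Longrightarrow> nu0 y = 0"
proof -
  assume y: "y \<le> -1"
  have "integral {-2..y} tau = integral {-2..y} (\<lambda>x. 0)"
    by (rule integral_cong) (use y tau_0 in auto)
  then show ?thesis by (simp add: nu0_def)
qed

lemma nu0_deriv: "(nu0 has_real_derivative tau y) (at y)"
proof (cases "y > -2")
  case True
  have d: "(nu0 has_real_derivative tau y) (at y within {-2..y+1})"
    unfolding nu0_def by (rule integral_has_real_derivative) (use True tau_cont in auto)
  have "y \<in> interior {-2..y+1}" using True by auto
  then have e: "at y within {-2..y+1} = at y" by (rule at_within_interior)
  show ?thesis using d unfolding e .
next
  case False
  have "((\<lambda>x. 0) has_real_derivative tau y) (at y)" using False tau_0 by simp
  then show ?thesis
    by (rule has_field_derivative_transform_within_open[where S="{..<-1}"]) (use False nu0_zero in auto)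
qed

lemma nu0_one: "y \<ge> 1 \<Longrightarrow> nu0 y = nu0 1 + (y - 1)"
proof -
  assume y: "y \<ge> 1"
  have int: "tau integrable_on {-2..y}" by (rule integrable_continuous_real) (rule tau_cont)
  have "integral {-2..1} tau + integral {1..y} tau = integral {-2..y} tau"
    using Henstock_Kurzweil_Integration.integral_combine[where a="-2" and c=1 and b=y and f=tau] y int by simp
  moreover have "integral {1..y} tau = integral {1..y} (\<lambda>x. 1)"
    by (rule integral_cong) (use tau_1 in auto)
  ultimately show ?thesis using y by (simp add: nu0_def)
qed

lemma nu0_one_bounds: "0 \<le> nu0 1" "nu0 1 \<le> 3"
proof -
  have int: "tau integrable_on {-2..1}" by (rule integrable_continuous_real) (rule tau_cont)
  show "0 \<le> nu0 1" unfolding nu0_def by (rule integral_nonneg[OF int]) (use tau_bounds in auto)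
  have "integral {-2..1} tau \<le> integral {-2..1} (\<lambda>x::real. 1)"
    by (rule integral_le[OF int]) (use tau_bounds in auto)
  then show "nu0 1 \<le> 3" by (simp add: nu0_def)
qed

definition dd :: real where "dd = 1 - nu0 1"
definition nu :: "real \<Rightarrow> real" where "nu t = nu0 (t + dd)"

lemma nu_zero: "t \<le> -4 \<Longrightarrow> nu t = 0"
  unfolding nu_def by (rule nu0_zero) (use nu0_one_bounds in \<open>simp add: dd_def\<close>)

lemma nu_id: "t \<ge> 4 \<Longrightarrow> nu t = t"
  using nu0_one_bounds nu0_one[of "t + dd"] by (simp add: nu_def dd_def)

lemma nu_deriv: "(nu has_real_derivative tau (t + dd)) (at t)"
proof -
  have "((\<lambda>t. nu0 (t + dd)) has_real_derivative tau (t + dd) * 1) (at t)"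
    by (rule DERIV_chain2[OF nu0_deriv]) (auto intro!: derivative_eq_intros)
  then show ?thesis by (simp add: nu_def [abs_def])
qed

lemma deriv_nu: "deriv nu = (\<lambda>t. tau (t + dd))"
  using nu_deriv DERIV_imp_deriv by blast

lemma smooth_tau_shift: "smooth_on UNIV (\<lambda>t. tau (t + dd))"
proof -
  have "smooth_on UNIV (\<lambda>t. tau (1 * t + dd))"
    by (rule smooth_compose[OF _ _ smooth_tau smooth_affine]) auto
  then show ?thesis by simp
qed

lemma smooth_nu: "smooth_on UNIV nu"
proof (rule salg_smooth[of UNIV "{nu} \<union> {g. smooth_on UNIV g}"])
  show "nu \<in> salg ({nu} \<union> {g. smooth_on UNIV g})" by (rule sbase) simp
  fix b assume b: "b \<in> {nu} \<union> {g. smooth_on UNIV g}"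
  show "b differentiable_on UNIV \<and> (\<forall>v. \<exists>g\<in>salg ({nu} \<union> {g. smooth_on UNIV g}). \<forall>x\<in>UNIV. frechet_derivative b (at x) v = g x)"
  proof (cases "b = nu")
    case True
    show ?thesis
    proof (intro conjI allI)
      show "b differentiable_on UNIV" unfolding True by (rule field_deriv_differentiable_on) (rule nu_deriv)
      fix v
      show "\<exists>g\<in>salg ({nu} \<union> {g. smooth_on UNIV g}). \<forall>x\<in>UNIV. frechet_derivative b (at x) v = g x"
      proof (rule salg_exI[where g="\<lambda>x. tau (x + dd) * v"])
        show "(\<lambda>x. tau (x + dd) * v) \<in> salg ({nu} \<union> {g. smooth_on UNIV g})"
          by (intro smult sconst sbase) (use smooth_tau_shift in simp)
        fix x :: real show "frechet_derivative b (at x) v = tau (x + dd) * v"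
          unfolding True by (rule frechet_field) (rule nu_deriv)
      qed
    qed
  next
    case False
    then have s: "smooth_on UNIV b" using b by simp
    show ?thesis using smooth_onD1[OF s] smooth_onD2[OF s] by (auto intro!: sbase)
  qed
qed simp

lemma nu_d1_bounds: "0 \<le> deriv nu t" "deriv nu t \<le> 1"
  by (simp_all add: deriv_nu tau_bounds)

lemma nu_d2_nonneg: "0 \<le> deriv (deriv nu) t"
proof -
  have "mono (\<lambda>t. tau (t + dd))" by (rule monoI) (auto intro: monoD[OF tau_mono])
  moreover have "(\<lambda>t. tau (t + dd)) differentiable at t"
    using smooth_on_at[OF smooth_tau_shift] by simp
  ultimately show ?thesis unfolding deriv_nu by (rule mono_deriv_nonneg)
qed

lemma hess_eq:
  assumes V: "open V" "x \<in> V"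
    and d1: "\<And>y. y \<in> V \<Longrightarrow> (f has_derivative f' y) (at y)"
    and d2: "((\<lambda>y. f' y v) has_derivative D) (at x)"
  shows "hess f x v = D"
proof -
  have e: "frechet_derivative f (at y) = f' y" if "y \<in> V" for y
    using frechet_derivative_at[OF d1[OF that]] by simp
  have "frechet_derivative (\<lambda>y. frechet_derivative f (at y) v) (at x) = frechet_derivative (\<lambda>y. f' y v) (at x)"
    by (rule frechet_derivative_local[OF V]) (simp add: e)
  also have "\<dots> = D" using frechet_derivative_at[OF d2] by simp
  finally show ?thesis unfolding hess_def by (simp add: fun_eq_iff)
qed

lemma smooth_d1: "smooth_on V f \<Longrightarrow> open V \<Longrightarrow> y \<in> V \<Longrightarrow> (f has_derivative frechet_derivative f (at y)) (at y)"
  by (rule smooth_on_has_derivative)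

lemma smooth_d2: assumes "smooth_on V f" "open V" "x \<in> V" shows
   "((\<lambda>y. frechet_derivative f (at y) v) has_derivative hess f x v) (at x)"
proof -
  have "hess f x v = frechet_derivative (\<lambda>y. frechet_derivative f (at y) v) (at x)"
    unfolding hess_def by (simp add: fun_eq_iff)
  then show ?thesis using smooth_on_has_derivative[OF smooth_onD2[OF assms(1)] assms(2,3)] by simp
qed

lemma hess_add:
  assumes "open V" "x \<in> V" "smooth_on V f" "smooth_on V g"
  shows "hess (\<lambda>y. f y + g y) x v w = hess f x v w + hess g x v w"
proof -
  have "hess (\<lambda>y. f y + g y) x v = (\<lambda>w. hess f x v w + hess g x v w)"
  proof (rule hess_eq[OF assms(1,2)])
    fix y assume "y \<in> V"
    then show "((\<lambda>y. f y + g y) has_derivative (\<lambda>v. frechet_derivative f (at y) v + frechet_derivative g (at y) v)) (at y)"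
      using smooth_d1 assms by (intro has_derivative_add) auto
  next
    show "((\<lambda>y. frechet_derivative f (at y) v + frechet_derivative g (at y) v) has_derivative
        (\<lambda>w. hess f x v w + hess g x v w)) (at x)"
      using smooth_d2 assms by (intro has_derivative_add) auto
  qed
  then show ?thesis by simp
qed

lemma hess_cmult:
  assumes "open V" "x \<in> V" "smooth_on V f"
  shows "hess (\<lambda>y. c * f y) x v w = c * hess f x v w"
proof -
  have "hess (\<lambda>y. c * f y) x v = (\<lambda>w. c * hess f x v w)"
  proof (rule hess_eq[OF assms(1,2)])
    fix y assume "y \<in> V"
    then show "((\<lambda>y. c * f y) has_derivative (\<lambda>v. c * frechet_derivative f (at y) v)) (at y)"
      using smooth_d1 assms by (intro has_derivative_mult_right) auto
  next
    show "((\<lambda>y. c * frechet_derivative f (at y) v) has_derivative (\<lambda>w. c * hess f x v w)) (at x)"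
      using smooth_d2 assms by (intro has_derivative_mult_right) auto
  qed
  then show ?thesis by simp
qed

lemma deriv_frechet: "(g::real\<Rightarrow>real) differentiable at y \<Longrightarrow> frechet_derivative g (at y) v = deriv g y * v"
  by (rule frechet_field) (simp add: DERIV_deriv_iff_real_differentiable)

lemma smooth_deriv:
  fixes g :: "real \<Rightarrow> real"
  assumes "smooth_on UNIV g" shows "smooth_on UNIV (deriv g)"
proof -
  have "smooth_on UNIV (\<lambda>y. frechet_derivative g (at y) 1)" using smooth_onD2[OF assms] .
  moreover have "(\<lambda>y. frechet_derivative g (at y) 1) = deriv g"
    using deriv_frechet smooth_on_at[OF assms] by (auto simp: fun_eq_iff)
  ultimately show ?thesis by simp
qed

lemma hess_comp:
  fixes g :: "real \<Rightarrow> real"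
  assumes V: "open V" "x \<in> V" and f: "smooth_on V f" and g: "smooth_on UNIV g"
  shows "hess (\<lambda>y. g (f y)) x v w = deriv (deriv g) (f x) * frechet_derivative f (at x) v * frechet_derivative f (at x) w
      + deriv g (f x) * hess f x v w"
proof -
  have dg: "(g has_real_derivative deriv g z) (at z)" for z
    using smooth_on_at[OF g] DERIV_deriv_iff_real_differentiable by blast
  have g1: "smooth_on UNIV (deriv g)" by (rule smooth_deriv[OF g])
  have ddg: "(deriv g has_real_derivative deriv (deriv g) z) (at z)" for z
    using smooth_on_at[OF g1] DERIV_deriv_iff_real_differentiable by blast
  have "hess (\<lambda>y. g (f y)) x v = (\<lambda>w. deriv g (f x) * hess f x v w + deriv (deriv g) (f x) * frechet_derivative f (at x) w * frechet_derivative f (at x) v)"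
  proof (rule hess_eq[OF V])
    fix y assume y: "y \<in> V"
    have "((\<lambda>y. g (f y)) has_derivative (\<lambda>v. deriv g (f y) * frechet_derivative f (at y) v)) (at y)"
      using has_derivative_compose[OF smooth_d1[OF f V(1) y] dg[unfolded has_field_derivative_def]]
      by (simp add: o_def)
    then show "((\<lambda>y. g (f y)) has_derivative (\<lambda>v. deriv g (f y) * frechet_derivative f (at y) v)) (at y)" .
  next
    have c: "((\<lambda>y. deriv g (f y)) has_derivative (\<lambda>w. deriv (deriv g) (f x) * frechet_derivative f (at x) w)) (at x)"
      using has_derivative_compose[OF smooth_d1[OF f V] ddg[unfolded has_field_derivative_def]]
      by (simp add: o_def)
    show "((\<lambda>y. deriv g (f y) * frechet_derivative f (at y) v) has_derivative
        (\<lambda>w. deriv g (f x) * hess f x v w + deriv (deriv g) (f x) * frechet_derivative f (at x) w * frechet_derivative f (at x) v)) (at x)"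
      by (rule has_derivative_eq_rhs[OF has_derivative_mult[OF c smooth_d2[OF f V]]]) (simp add: fun_eq_iff algebra_simps)
  qed
  then show ?thesis by (simp add: algebra_simps)
qed

lemma hess_linear2:
  assumes "open V" "x \<in> V" "smooth_on V f"
  shows "linear (hess f x v)"
  using smooth_d2[OF assms(3,1,2)] has_derivative_linear by blast

lemma hess_linear1:
  assumes V: "open V" "x \<in> V" and f: "smooth_on V f"
  shows "linear (\<lambda>v. hess f x v w)"
proof (rule linearI)
  have lin: "linear (frechet_derivative f (at y))" if "y \<in> V" for y
    using smooth_on_at[OF f V(1) that] by (rule linear_frechet_derivative)
  fix v1 v2
  have "hess f x (v1 + v2) = (\<lambda>w. hess f x v1 w + hess f x v2 w)"
  proof (rule hess_eq[OF V])
    show "\<And>y. y \<in> V \<Longrightarrow> (f has_derivative frechet_derivative f (at y)) (at y)" using smooth_d1[OF f V(1)] .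
    have "((\<lambda>y. frechet_derivative f (at y) v1 + frechet_derivative f (at y) v2) has_derivative
        (\<lambda>w. hess f x v1 w + hess f x v2 w)) (at x)"
      by (intro has_derivative_add smooth_d2[OF f V])
    then show "((\<lambda>y. frechet_derivative f (at y) (v1 + v2)) has_derivative (\<lambda>w. hess f x v1 w + hess f x v2 w)) (at x)"
      by (rule has_derivative_transform_within_open[OF _ V]) (auto simp: linear_add[OF lin])
  qed
  then show "hess f x (v1 + v2) w = hess f x v1 w + hess f x v2 w" by simp
next
  have lin: "linear (frechet_derivative f (at y))" if "y \<in> V" for y
    using smooth_on_at[OF f V(1) that] by (rule linear_frechet_derivative)
  fix c :: real and v
  have "hess f x (c *\<^sub>R v) = (\<lambda>w. c * hess f x v w)"
  proof (rule hess_eq[OF V])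
    show "\<And>y. y \<in> V \<Longrightarrow> (f has_derivative frechet_derivative f (at y)) (at y)" using smooth_d1[OF f V(1)] .
    have "((\<lambda>y. c * frechet_derivative f (at y) v) has_derivative (\<lambda>w. c * hess f x v w)) (at x)"
      by (intro has_derivative_mult_right smooth_d2[OF f V])
    then show "((\<lambda>y. frechet_derivative f (at y) (c *\<^sub>R v)) has_derivative (\<lambda>w. c * hess f x v w)) (at x)"
      by (rule has_derivative_transform_within_open[OF _ V]) (auto simp: linear_scale[OF lin])
  qed
  then show "hess f x (c *\<^sub>R v) w = c *\<^sub>R hess f x v w" by simp
qed

lemma hess_cont:
  assumes "open V" "smooth_on V f"
  shows "continuous_on V (\<lambda>x. hess f x v w)"
proof -
  have "smooth_on V (\<lambda>x. frechet_derivative (\<lambda>y. frechet_derivative f (at y) v) (at x) w)"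
    using smooth_onD2[OF smooth_onD2[OF assms(2)]] .
  then show ?thesis using smooth_on_cont[OF _ assms(1)] unfolding hess_def by blast
qed

definition levi :: "(complex ^ 'm \<Rightarrow> real) \<Rightarrow> complex ^ 'm \<Rightarrow> complex ^ 'm \<Rightarrow> real" where
  "levi f x v = hess f x v v + hess f x (Jc v) (Jc v)"

lemma strictly_psh_on_levi: "strictly_psh_on U f \<longleftrightarrow> (\<forall>x\<in>U. \<forall>v. v \<noteq> 0 \<longrightarrow> levi f x v > 0)"
  by (simp add: strictly_psh_on_def levi_def)

lemma Jc_add: "Jc (v + w) = Jc v + Jc w" by (simp add: Jc_def vec_eq_iff algebra_simps)
lemma Jc_scale: "Jc (c *\<^sub>R v) = c *\<^sub>R Jc v" by (simp add: Jc_def vec_eq_iff scaleR_conv_of_real)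
lemma Jc_linear: "linear Jc" by (rule linearI) (simp_all add: Jc_add Jc_scale)
lemma Jc_sum: "Jc (\<Sum>i\<in>I. c i *\<^sub>R u i) = (\<Sum>i\<in>I. c i *\<^sub>R Jc (u i))"
  by (simp add: linear_sum[OF Jc_linear] Jc_scale)

lemma hess_sum_sum:
  assumes V: "open V" "x \<in> V" and f: "smooth_on V f" and I: "finite I" and J: "finite J"
  shows "hess f x (\<Sum>i\<in>I. a i *\<^sub>R u i) (\<Sum>j\<in>J. b j *\<^sub>R w j) = (\<Sum>i\<in>I. \<Sum>j\<in>J. a i * b j * hess f x (u i) (w j))"
proof -
  have l1: "linear (\<lambda>v. hess f x v W)" for W by (rule hess_linear1[OF V f])
  have l2: "linear (hess f x v)" for v by (rule hess_linear2[OF V f])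
  have A: "hess f x (\<Sum>i\<in>I. a i *\<^sub>R u i) W = (\<Sum>i\<in>I. a i * hess f x (u i) W)" for W
    using linear_sum[OF l1[of W], of "\<lambda>i. a i *\<^sub>R u i" I] linear_scale[OF l1[of W]] by simp
  have B: "hess f x v (\<Sum>j\<in>J. b j *\<^sub>R w j) = (\<Sum>j\<in>J. b j * hess f x v (w j))" for v
    using linear_sum[OF l2[of v], of "\<lambda>j. b j *\<^sub>R w j" J] linear_scale[OF l2[of v]] by simp
  have "hess f x (\<Sum>i\<in>I. a i *\<^sub>R u i) (\<Sum>j\<in>J. b j *\<^sub>R w j) = (\<Sum>i\<in>I. a i * hess f x (u i) (\<Sum>j\<in>J. b j *\<^sub>R w j))"
    by (rule A)
  also have "\<dots> = (\<Sum>i\<in>I. a i * (\<Sum>j\<in>J. b j * hess f x (u i) (w j)))" by (simp only: B)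
  also have "\<dots> = (\<Sum>i\<in>I. \<Sum>j\<in>J. a i * b j * hess f x (u i) (w j))" by (simp add: sum_distrib_left mult.assoc)
  finally show ?thesis .
qed

definition leviS :: "(complex ^ 'm \<Rightarrow> real) \<Rightarrow> complex ^ 'm \<Rightarrow> complex ^ 'm \<Rightarrow> real" where
  "leviS f x v = (\<Sum>i\<in>Basis. \<Sum>j\<in>Basis. (v \<bullet> i) * (v \<bullet> j) * (hess f x i j + hess f x (Jc i) (Jc j)))"

lemma levi_eq_S:
  assumes V: "open V" "x \<in> V" and f: "smooth_on V f"
  shows "levi f x v = leviS f x v"
proof -
  have v: "v = (\<Sum>i\<in>Basis. (v \<bullet> i) *\<^sub>R i)" by (simp add: euclidean_representation)
  have jv: "Jc v = (\<Sum>i\<in>Basis. (v \<bullet> i) *\<^sub>R Jc i)" by (subst v) (rule Jc_sum)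
  have "hess f x v v = (\<Sum>i\<in>Basis. \<Sum>j\<in>Basis. (v \<bullet> i) * (v \<bullet> j) * hess f x i j)"
    by (subst (1 2) v) (rule hess_sum_sum[OF V f]; simp)
  moreover have "hess f x (Jc v) (Jc v) = (\<Sum>i\<in>Basis. \<Sum>j\<in>Basis. (v \<bullet> i) * (v \<bullet> j) * hess f x (Jc i) (Jc j))"
    unfolding jv by (rule hess_sum_sum[OF V f]; simp)
  ultimately show ?thesis by (simp add: levi_def leviS_def algebra_simps sum.distrib)
qed

lemma leviS_scale: "leviS f x (r *\<^sub>R v) = r^2 * leviS f x v"
  by (simp add: leviS_def sum_distrib_left power2_eq_square algebra_simps)

lemma leviS_cont:
  assumes V: "open V" and f: "smooth_on V f"
  shows "continuous_on (V \<times> UNIV) (\<lambda>p. leviS f (fst p) (snd p))"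
proof -
  have c: "continuous_on (V \<times> UNIV) (\<lambda>p. hess f (fst p) a b)" for a b
    by (rule continuous_on_compose2[OF hess_cont[OF V f] continuous_on_fst]) auto
  show ?thesis unfolding leviS_def
    by (intro continuous_intros c)
qed

lemma levi_compact_min:
  fixes f :: "complex ^ 'm \<Rightarrow> real"
  assumes V: "open V" and f: "smooth_on V f" and C: "compact C" "C \<subseteq> V" "C \<noteq> {}"
  shows "\<exists>x0\<in>C. \<exists>v0. norm v0 = 1 \<and> (\<forall>x\<in>C. \<forall>v. norm v = 1 \<longrightarrow> levi f x0 v0 \<le> levi f x v)"
proof -
  have K: "compact (C \<times> sphere (0::complex^'m) 1)" using C(1) compact_sphere[of "0::complex^'m" 1] by (rule compact_Times)
  have ne: "C \<times> sphere (0::complex^'m) 1 \<noteq> {}" using C by auto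
  have cont: "continuous_on (C \<times> sphere 0 1) (\<lambda>p. leviS f (fst p) (snd p))"
    by (rule continuous_on_subset[OF leviS_cont[OF V f]]) (use C in auto)
  obtain p0 where p0: "p0 \<in> C \<times> sphere 0 1" "\<forall>p\<in>C \<times> sphere 0 1. leviS f (fst p0) (snd p0) \<le> leviS f (fst p) (snd p)"
    using continuous_attains_inf[OF K ne cont] by blast
  show ?thesis
  proof (intro bexI[of _ "fst p0"] exI[of _ "snd p0"] conjI ballI allI impI)
    show "fst p0 \<in> C" "norm (snd p0) = 1" using p0(1) by auto
    fix x v assume x: "x \<in> C" and v: "norm (v::complex^'m) = 1"
    have "leviS f (fst p0) (snd p0) \<le> leviS f x v" using p0(2)[rule_format, of "(x,v)"] x v by auto
    moreover have "levi f (fst p0) (snd p0) = leviS f (fst p0) (snd p0)"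
      using levi_eq_S[OF V _ f] p0(1) C by auto
    moreover have "levi f x v = leviS f x v" using levi_eq_S[OF V _ f] x C by auto
    ultimately show "levi f (fst p0) (snd p0) \<le> levi f x v" by simp
  qed
qed

lemma levi_scale_bound:
  assumes V: "open V" "x \<in> V" and f: "smooth_on V f"
    and b: "\<And>u. norm u = 1 \<Longrightarrow> m \<le> levi f x u"
  shows "m * (norm v)^2 \<le> levi f x v"
proof (cases "v = 0")
  case True
  have "levi f x v = leviS f x v" using levi_eq_S[OF V f] .
  then show ?thesis using True by (simp add: leviS_def)
next
  case False
  define u where "u = (1 / norm v) *\<^sub>R v"
  have u: "norm u = 1" using False by (simp add: u_def)
  have vu: "v = norm v *\<^sub>R u" using False by (simp add: u_def)
  have "levi f x v = leviS f x v" using levi_eq_S[OF V f] .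
  also have "\<dots> = (norm v)^2 * leviS f x u" by (subst vu) (rule leviS_scale)
  also have "leviS f x u = levi f x u" using levi_eq_S[OF V f] by simp
  finally have "levi f x v = (norm v)^2 * levi f x u" .
  moreover have "m * (norm v)^2 \<le> levi f x u * (norm v)^2"
    by (rule mult_right_mono[OF b[OF u]]) simp
  then have "m * (norm v)^2 \<le> (norm v)^2 * levi f x u" by (simp add: mult.commute)
  ultimately show ?thesis by simp
qed

lemma levi_lower:
  assumes V: "open V" and f: "smooth_on V f" and C: "compact C" "C \<subseteq> V"
  shows "\<exists>K\<ge>0. \<forall>x\<in>C. \<forall>v. - K * (norm v)^2 \<le> levi f x v"
proof (cases "C = {}")
  case True then show ?thesis by auto
next
  case False
  obtain x0 v0 where m: "x0 \<in> C" "norm v0 = 1" "\<forall>x\<in>C. \<forall>v. norm v = 1 \<longrightarrow> levi f x0 v0 \<le> levi f x v"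
    using levi_compact_min[OF V f C False] by blast
  define K where "K = max 0 (- levi f x0 v0)"
  have "\<forall>x\<in>C. \<forall>v. - K * (norm v)^2 \<le> levi f x v"
  proof (intro ballI allI)
    fix x v assume x: "x \<in> C"
    have "\<And>u. norm u = 1 \<Longrightarrow> - K \<le> levi f x u" using m(3) x by (force simp: K_def)
    then show "- K * (norm v)^2 \<le> levi f x v" using levi_scale_bound[OF V _ f] x C by blast
  qed
  then show ?thesis by (intro exI[of _ K]) (auto simp: K_def)
qed

lemma levi_pos:
  assumes V: "open V" and f: "smooth_on V f" and C: "compact C" "C \<subseteq> V"
    and pos: "\<And>x v. x \<in> C \<Longrightarrow> v \<noteq> 0 \<Longrightarrow> levi f x v > 0"
  shows "\<exists>c>0. \<forall>x\<in>C. \<forall>v. c * (norm v)^2 \<le> levi f x v"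
proof (cases "C = {}")
  case True then show ?thesis by (intro exI[of _ 1]) auto
next
  case False
  obtain x0 v0 where m: "x0 \<in> C" "norm v0 = 1" "\<forall>x\<in>C. \<forall>v. norm v = 1 \<longrightarrow> levi f x0 v0 \<le> levi f x v"
    using levi_compact_min[OF V f C False] by blast
  have "v0 \<noteq> 0" using m(2) by auto
  then have p: "levi f x0 v0 > 0" using pos[OF m(1)] by blast
  have "\<forall>x\<in>C. \<forall>v. levi f x0 v0 * (norm v)^2 \<le> levi f x v"
  proof (intro ballI allI)
    fix x v assume x: "x \<in> C"
    have "\<And>u. norm u = 1 \<Longrightarrow> levi f x0 v0 \<le> levi f x u" using m(3) x by blast
    then show "levi f x0 v0 * (norm v)^2 \<le> levi f x v" using levi_scale_bound[OF V _ f] x C by blast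
  qed
  then show ?thesis using p by blast
qed

lemma bessel2:
  fixes Z V W :: "'a::real_inner"
  assumes o: "inner V W = 0" and n: "inner W W = inner V V"
  shows "(inner Z V)^2 + (inner Z W)^2 \<le> inner Z Z * inner V V"
proof -
  define a where "a = inner Z V"
  define b where "b = inner Z W"
  define n where "n = inner V V"
  have n0: "n \<ge> 0" by (simp add: n_def)
  have "0 \<le> inner (n *\<^sub>R Z - a *\<^sub>R V - b *\<^sub>R W) (n *\<^sub>R Z - a *\<^sub>R V - b *\<^sub>R W)" by simp
  also have "\<dots> = n * (n * inner Z Z - (a^2 + b^2))"
    using o n by (simp add: inner_diff_left inner_diff_right inner_commute a_def b_def n_def
        power2_eq_square algebra_simps)
  finally have *: "0 \<le> n * (n * inner Z Z - (a^2 + b^2))" .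
  show ?thesis
  proof (cases "n = 0")
    case True
    then have "V = 0" "W = 0" using n by (auto simp: n_def)
    then show ?thesis by simp
  next
    case False
    then have "n > 0" using n0 by simp
    then have "0 \<le> n * inner Z Z - (a^2 + b^2)" using * by (simp add: zero_le_mult_iff)
    then show ?thesis by (simp add: a_def b_def n_def mult.commute)
  qed
qed

lemma inner_Jc_self: "inner v (Jc v) = 0"
  by (simp add: inner_vec_def Jc_def inner_complex_def algebra_simps)

lemma inner_Jc_Jc: "inner (Jc v) (Jc w) = inner v w"
  by (simp add: inner_vec_def Jc_def inner_complex_def algebra_simps)

lemma Jc_zero_iff: "Jc v = 0 \<longleftrightarrow> v = 0"
  by (simp add: Jc_def vec_eq_iff)

lemma smooth_sum: "open U \<Longrightarrow> finite A \<Longrightarrow> (\<And>a. a \<in> A \<Longrightarrow> smooth_on U (f a)) \<Longrightarrow> smooth_on U (\<lambda>x. \<Sum>a\<in>A. f a x)"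
proof (rule smooth_salg[of U "f ` A"])
  assume "finite A"
  then show "(\<lambda>x. \<Sum>a\<in>A. f a x) \<in> salg (f ` A)" by (rule salg_sum) (auto intro: sbase)
qed auto

lemma smooth_inner_self: "open U \<Longrightarrow> smooth_on U (\<lambda>z::'a::euclidean_space. inner z z)"
proof -
  assume U: "open U"
  have "smooth_on U (\<lambda>z::'a. \<Sum>b\<in>Basis. (inner z b) * (inner z b))"
    by (intro smooth_sum smooth_mult U smooth_linear bounded_linear_inner_left) auto
  then show ?thesis by (simp add: euclidean_inner[symmetric])
qed

definition ell :: "'a::real_inner \<Rightarrow> real" where "ell z = ln (inner z z)"

lemma smooth_ell: "smooth_on (UNIV - {0}) (ell :: 'a::euclidean_space \<Rightarrow> real)"
  unfolding ell_def[abs_def]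
  by (rule smooth_ln_comp) (auto intro!: smooth_inner_self)

lemma ell_deriv: assumes y: "(y::'a::real_inner) \<noteq> 0" shows "(ell has_derivative (\<lambda>v. 2 * inner y v / inner y y)) (at y)"
proof -
  have d1: "((\<lambda>z. inner z z) has_derivative (\<lambda>h. inner y h + inner h y)) (at y)"
    by (rule has_derivative_inner[OF has_derivative_ident has_derivative_ident])
  have d2: "(ln has_derivative (\<lambda>h. inverse (inner y y) * h)) (at (inner y y))"
    using DERIV_ln[of "inner y y"] y by (simp add: has_field_derivative_def)
  have "((\<lambda>z. ln (inner z z)) has_derivative (\<lambda>h. inverse (inner y y) * (inner y h + inner h y))) (at y)"
    by (rule has_derivative_compose[OF d1 d2])
  then show ?thesis unfolding ell_def[abs_def]
    by (rule has_derivative_eq_rhs) (simp add: fun_eq_iff inner_commute field_simps)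
qed

lemma levi_ell: assumes x: "x \<noteq> 0" shows "levi ell x v \<ge> 0"
proof -
  have V: "open (UNIV - {0::complex^'m})" "x \<in> UNIV - {0}" using x by auto
  have h: "hess ell x u = (\<lambda>w. 2 * inner w u / inner x x - 2 * inner x u * (2 * inner x w) / (inner x x)^2)" for u
  proof (rule hess_eq[OF V])
    show "\<And>y. y \<in> UNIV - {0} \<Longrightarrow> (ell has_derivative (\<lambda>v. 2 * inner y v / inner y y)) (at y)"
      using ell_deriv by auto
    show "((\<lambda>y. 2 * inner y u / inner y y) has_derivative
       (\<lambda>w. 2 * inner w u / inner x x - 2 * inner x u * (2 * inner x w) / (inner x x)^2)) (at x)"
      by (rule has_derivative_eq_rhs, (rule derivative_intros)+) (use x in \<open>auto simp: fun_eq_iff inner_commute field_simps power2_eq_square\<close>)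
  qed
  define N where "N = inner x x"
  have N: "N > 0" using x by (simp add: N_def)
  have b: "(inner x v)^2 + (inner x (Jc v))^2 \<le> N * inner v v"
    unfolding N_def by (rule bessel2) (simp_all add: inner_Jc_self inner_Jc_Jc)
  have "levi ell x v = 4 * (N * inner v v - (inner x v)^2 - (inner x (Jc v))^2) / N^2"
    using N by (simp add: levi_def h N_def[symmetric] inner_Jc_Jc field_simps power2_eq_square inner_commute)
  also have "\<dots> \<ge> 0" using b N by simp
  finally show ?thesis .
qed

lemma has_derivative_vec_nth' [derivative_intros]:
  "(f has_derivative f') F \<Longrightarrow> ((\<lambda>x. f x $ i) has_derivative (\<lambda>h. f' h $ i)) F"
  by (rule bounded_linear.has_derivative[OF bounded_linear_vec_nth])

definition Gf :: "('m::finite \<Rightarrow> real) \<Rightarrow> complex ^ 'm \<Rightarrow> real \<Rightarrow> real" where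
  "Gf lam z s = (\<Sum>a\<in>UNIV. exp (- 2 * lam a * s) * inner (z $ a) (z $ a))"

lemma Gf_zero_s: "Gf lam z 0 = inner z z"
  by (simp add: Gf_def inner_vec_def)

lemma Gf_nonneg: "Gf lam z s \<ge> 0"
  unfolding Gf_def by (intro sum_nonneg) simp

lemma nonzero_comp: "z \<noteq> (0::complex^'m) \<Longrightarrow> \<exists>a. z $ a \<noteq> 0"
  by (simp add: vec_eq_iff)

lemma Gf_strict_dec:
  assumes lam: "\<And>a. lam a > 0" and z: "z \<noteq> 0" and s: "s < s'"
  shows "Gf lam z s' < Gf lam z s"
proof -
  obtain b where b: "z $ b \<noteq> 0" using nonzero_comp[OF z] by blast
  have le: "exp (- 2 * lam a * s') * inner (z $ a) (z $ a) \<le> exp (- 2 * lam a * s) * inner (z $ a) (z $ a)" for a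
    using lam[of a] s by (intro mult_right_mono) (auto simp: mult_left_mono)
  have lt: "exp (- 2 * lam b * s') * inner (z $ b) (z $ b) < exp (- 2 * lam b * s) * inner (z $ b) (z $ b)"
    using lam[of b] s b by (intro mult_strict_right_mono) auto
  show ?thesis unfolding Gf_def
    by (rule sum_strict_mono_ex1) (use le lt in auto)
qed

lemma Gf_cont_s: "continuous_on S (Gf lam z)"
  unfolding Gf_def[abs_def] by (intro continuous_intros)

lemma Gf_cont_joint: "continuous_on S (\<lambda>p. Gf lam (fst p) (snd p))"
  unfolding Gf_def[abs_def] by (intro continuous_intros)

lemma Gf_exists:
  assumes lam: "\<And>a. lam a > 0" and z: "z \<noteq> 0" and c: "c > 0"
  shows "\<exists>s. Gf lam z s = c"
proof -
  obtain b where b: "z $ b \<noteq> 0" using nonzero_comp[OF z] by blast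
  define q where "q = inner (z $ b) (z $ b)"
  have q: "q > 0" using b by (simp add: q_def)
  define lm where "lm = Min (range lam)"
  have lm: "lm > 0" "\<And>a. lm \<le> lam a" using lam by (auto simp: lm_def)
  define N where "N = inner z z"
  have N: "N > 0" using z by (simp add: N_def)
  define s1 where "s1 = - \<bar>ln (c / q)\<bar> / (2 * lam b)"
  define s2 where "s2 = \<bar>ln (N / c)\<bar> / (2 * lm)"
  have s1: "s1 \<le> 0" using lam[of b] by (simp add: s1_def divide_nonpos_pos)
  have s2: "s2 \<ge> 0" using lm by (simp add: s2_def)
  have "c \<le> exp (- 2 * lam b * s1) * q"
  proof -
    have "- 2 * lam b * s1 = \<bar>ln (c / q)\<bar>" using lam[of b] by (simp add: s1_def)
    then have "exp (- 2 * lam b * s1) \<ge> exp (ln (c / q))" by simp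
    then have "exp (- 2 * lam b * s1) \<ge> c / q" using c q by simp
    then show ?thesis using q by (simp add: divide_le_eq)
  qed
  also have "\<dots> \<le> Gf lam z s1" unfolding Gf_def q_def
    by (rule member_le_sum) auto
  finally have g1: "c \<le> Gf lam z s1" .
  have "Gf lam z s2 \<le> (\<Sum>a\<in>UNIV. exp (- 2 * lm * s2) * inner (z $ a) (z $ a))" unfolding Gf_def
    by (intro sum_mono mult_right_mono) (use lm s2 in \<open>auto simp: mult_right_mono\<close>)
  also have "\<dots> = exp (- 2 * lm * s2) * N" by (simp add: N_def inner_vec_def sum_distrib_left)
  also have "\<dots> \<le> c"
  proof -
    have "- 2 * lm * s2 = - \<bar>ln (N / c)\<bar>" using lm by (simp add: s2_def)
    then have "exp (- 2 * lm * s2) \<le> exp (ln (c / N))"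
      using c N by (simp add: ln_div)
    then have "exp (- 2 * lm * s2) \<le> c / N" using c N by simp
    then show ?thesis using N by (simp add: le_divide_eq)
  qed
  finally have g2: "Gf lam z s2 \<le> c" .
  show ?thesis using IVT2'[of "Gf lam z" s2 c s1, OF g2 g1] s1 s2 Gf_cont_s by force
qed

definition Tt :: "('m::finite \<Rightarrow> real) \<Rightarrow> complex ^ 'm \<Rightarrow> real \<Rightarrow> real" where
  "Tt lam z c = (THE s. Gf lam z s = c)"

lemma Gf_inj:
  assumes lam: "\<And>a. lam a > 0" and z: "z \<noteq> 0" and "Gf lam z s = Gf lam z s'"
  shows "s = s'"
  using Gf_strict_dec[of lam, OF lam z, of s s'] Gf_strict_dec[of lam, OF lam z, of s' s] assms(3)
  by (cases s s' rule: linorder_cases) auto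

lemma Tt_eq:
  assumes lam: "\<And>a. lam a > 0" and z: "z \<noteq> 0" and c: "c > 0"
  shows "Gf lam z (Tt lam z c) = c"
proof -
  obtain s where s: "Gf lam z s = c" using Gf_exists[of lam, OF lam z c] by blast
  have "Tt lam z c = s" unfolding Tt_def
    by (rule the_equality[where P="\<lambda>s. Gf lam z s = c", OF s]) (use Gf_inj[of lam, OF lam z] s in auto)
  then show ?thesis using s by simp
qed

lemma Tt_unique:
  assumes lam: "\<And>a. lam a > 0" and z: "z \<noteq> 0" and s: "Gf lam z s = c"
  shows "Tt lam z c = s"
  unfolding Tt_def by (rule the_equality[where P="\<lambda>s. Gf lam z s = c", OF s]) (use Gf_inj[of lam, OF lam z] s in auto)

lemma Tt_less_iff:
  assumes lam: "\<And>a. lam a > 0" and z: "z \<noteq> 0" and c: "c > 0"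
  shows "Tt lam z c < b \<longleftrightarrow> Gf lam z b < c"
proof
  assume "Tt lam z c < b"
  then have "Gf lam z b < Gf lam z (Tt lam z c)" by (rule Gf_strict_dec[of lam, OF lam z])
  then show "Gf lam z b < c" using Tt_eq[of lam, OF lam z c] by simp
next
  assume h: "Gf lam z b < c"
  show "Tt lam z c < b"
  proof (rule ccontr)
    assume "\<not> Tt lam z c < b"
    then have "b \<le> Tt lam z c" by simp
    then have "Gf lam z (Tt lam z c) \<le> Gf lam z b"
      using Gf_strict_dec[of lam, OF lam z, of b "Tt lam z c"] by (cases "b = Tt lam z c") auto
    then show False using h Tt_eq[of lam, OF lam z c] by simp
  qed
qed

lemma Tt_greater_iff:
  assumes lam: "\<And>a. lam a > 0" and z: "z \<noteq> 0" and c: "c > 0"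
  shows "a < Tt lam z c \<longleftrightarrow> c < Gf lam z a"
proof
  assume "a < Tt lam z c"
  then have "Gf lam z (Tt lam z c) < Gf lam z a" by (rule Gf_strict_dec[of lam, OF lam z])
  then show "c < Gf lam z a" using Tt_eq[of lam, OF lam z c] by simp
next
  assume h: "c < Gf lam z a"
  show "a < Tt lam z c"
  proof (rule ccontr)
    assume "\<not> a < Tt lam z c"
    then have "Tt lam z c \<le> a" by simp
    then have "Gf lam z a \<le> Gf lam z (Tt lam z c)"
      using Gf_strict_dec[of lam, OF lam z, of "Tt lam z c" a] by (cases "a = Tt lam z c") auto
    then show False using h Tt_eq[of lam, OF lam z c] by simp
  qed
qed

lemma Tt_cont:
  fixes z0 :: "complex ^ 'm::finite"
  assumes lam: "\<And>a. lam a > 0" and z0: "z0 \<noteq> 0" and c0: "c0 > 0"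
  shows "continuous (at (z0, c0)) (\<lambda>p. Tt lam (fst p) (snd p))"
proof -
  let ?T = "{p :: (complex^'m) \<times> real. fst p \<noteq> 0 \<and> snd p > 0}"
  have oT: "open ?T"
  proof -
    have "?T = (UNIV - {0}) \<times> {0<..}" by auto
    moreover have "open ((UNIV - {0::complex^'m}) \<times> {0::real<..})"
      by (intro open_Times open_Diff) auto
    ultimately show ?thesis by simp
  qed
  have evT: "\<forall>\<^sub>F p in at (z0, c0). fst p \<noteq> 0 \<and> snd p > 0"
    unfolding eventually_at_topological by (rule exI[of _ ?T]) (use oT z0 c0 in auto)
  have gc: "((\<lambda>p. Gf lam (fst p) b - snd p) \<longlongrightarrow> Gf lam z0 b - c0) (at (z0, c0))" for b
  proof -
    have "continuous_on UNIV (\<lambda>p::(complex^'m) \<times> real. Gf lam (fst p) b - snd p)"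
      unfolding Gf_def by (intro continuous_intros)
    then have "isCont (\<lambda>p::(complex^'m) \<times> real. Gf lam (fst p) b - snd p) (z0, c0)"
      by (simp add: continuous_on_eq_continuous_at)
    then show ?thesis by (simp add: isCont_def)
  qed
  let ?s0 = "Tt lam z0 c0"
  have "((\<lambda>p. Tt lam (fst p) (snd p)) \<longlongrightarrow> ?s0) (at (z0, c0))"
  proof (rule order_tendstoI)
    fix b assume b: "?s0 < b"
    then have "Gf lam z0 b - c0 < 0" using Tt_less_iff[of lam, OF lam z0 c0] by simp
    then have "\<forall>\<^sub>F p in at (z0, c0). Gf lam (fst p) b - snd p < 0"
      using gc[of b] order_tendstoD(2) by blast
    then show "\<forall>\<^sub>F p in at (z0, c0). Tt lam (fst p) (snd p) < b"
      using evT by eventually_elim (use Tt_less_iff[of lam, OF lam] in auto)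
  next
    fix a assume a: "a < ?s0"
    then have "Gf lam z0 a - c0 > 0" using Tt_greater_iff[of lam, OF lam z0 c0] by simp
    then have "\<forall>\<^sub>F p in at (z0, c0). Gf lam (fst p) a - snd p > 0"
      using gc[of a] order_tendstoD(1) by blast
    then show "\<forall>\<^sub>F p in at (z0, c0). a < Tt lam (fst p) (snd p)"
      using evT by eventually_elim (use Tt_greater_iff[of lam, OF lam] in auto)
  qed
  then show ?thesis by (simp add: continuous_def)
qed

definition gz :: "('m::finite \<Rightarrow> real) \<Rightarrow> complex ^ 'm \<Rightarrow> real \<Rightarrow> complex ^ 'm \<Rightarrow> real" where
  "gz lam z s h = (\<Sum>a\<in>UNIV. exp (- 2 * lam a * s) * (2 * inner (z $ a) (h $ a)))"
definition gs :: "('m::finite \<Rightarrow> real) \<Rightarrow> complex ^ 'm \<Rightarrow> real \<Rightarrow> real" where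
  "gs lam z s = (\<Sum>a\<in>UNIV. (- 2 * lam a) * exp (- 2 * lam a * s) * inner (z $ a) (z $ a))"

lemma Gf_has_deriv:
  "((\<lambda>p. Gf lam (fst p) (snd p)) has_derivative (\<lambda>q. gz lam z s (fst q) + gs lam z s * snd q)) (at (z, s))"
  unfolding Gf_def
  apply (rule has_derivative_eq_rhs)
   apply (rule derivative_eq_intros refl | simp)+
  apply (simp add: fun_eq_iff gz_def gs_def sum_subtractf sum_distrib_left sum_negf inner_commute algebra_simps)
  done

lemma gs_neg: assumes lam: "\<And>a. lam a > 0" and z: "z \<noteq> 0" shows "gs lam z s < 0"
proof -
  obtain b where b: "z $ b \<noteq> 0" using nonzero_comp[OF z] by blast
  have "gs lam z s = - (\<Sum>a\<in>UNIV. 2 * lam a * exp (- 2 * lam a * s) * inner (z $ a) (z $ a))"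
    by (simp add: gs_def sum_negf[symmetric])
  moreover have "(\<Sum>a\<in>UNIV. 2 * lam a * exp (- 2 * lam a * s) * inner (z $ a) (z $ a)) > 0"
  proof (rule sum_pos2[where i=b])
    show "0 < 2 * lam b * exp (- 2 * lam b * s) * inner (z $ b) (z $ b)" using lam[of b] b by simp
    show "\<And>i. i \<in> UNIV \<Longrightarrow> 0 \<le> 2 * lam i * exp (- 2 * lam i * s) * inner (z $ i) (z $ i)"
      using lam by (simp add: less_imp_le)
  qed auto
  ultimately show ?thesis by simp
qed

lemma gz_linear: "linear (gz lam z s)"
  by (rule linearI) (simp_all add: gz_def inner_add_right sum.distrib sum_distrib_left algebra_simps)

lemma Tt_has_deriv:
  fixes z :: "complex ^ 'm::finite"
  assumes lam: "\<And>a. lam a > 0" and z: "z \<noteq> 0" and c: "c > 0"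
  shows "((\<lambda>p. (fst p, Tt lam (fst p) (snd p))) has_derivative
     (\<lambda>q. (fst q, (snd q - gz lam z (Tt lam z c) (fst q)) / gs lam z (Tt lam z c)))) (at (z, c))"
proof -
  let ?s = "Tt lam z c"
  let ?g = "\<lambda>p::(complex^'m) \<times> real. (fst p, Tt lam (fst p) (snd p))"
  let ?f = "\<lambda>p::(complex^'m) \<times> real. (fst p, Gf lam (fst p) (snd p))"
  let ?f' = "\<lambda>q::(complex^'m) \<times> real. (fst q, gz lam z ?s (fst q) + gs lam z ?s * snd q)"
  let ?g' = "\<lambda>q::(complex^'m) \<times> real. (fst q, (snd q - gz lam z ?s (fst q)) / gs lam z ?s)"
  let ?T = "{p :: (complex^'m) \<times> real. fst p \<noteq> 0 \<and> snd p > 0}"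
  have gs0: "gs lam z ?s \<noteq> 0" using gs_neg[of lam, OF lam z] by (metis less_irrefl)
  show ?thesis
  proof (rule has_derivative_inverse_basic[where f="?f" and f'="?f'" and T="?T"])
    show "(?f has_derivative ?f') (at (?g (z, c)))"
      by (simp, intro has_derivative_Pair has_derivative_fst has_derivative_ident Gf_has_deriv)
    have "linear ?g'"
      by (rule linearI) (use gs0 in \<open>simp_all add: linear_add[OF gz_linear] linear_scale[OF gz_linear] field_simps\<close>)
    then show "bounded_linear ?g'" by (simp add: linear_conv_bounded_linear)
    show "?g' \<circ> ?f' = id" using gs0 by (auto simp: fun_eq_iff)
    have "continuous (at (z, c)) (\<lambda>p. Tt lam (fst p) (snd p))" by (rule Tt_cont[of lam, OF lam z c])
    then show "continuous (at (z, c)) ?g" by (intro continuous_Pair continuous_fst continuous_ident)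
    have "?T = (UNIV - {0}) \<times> {0<..}" by auto
    moreover have "open ((UNIV - {0::complex^'m}) \<times> {0::real<..})"
      by (intro open_Times open_Diff) auto
    ultimately show "open ?T" by simp
    show "(z, c) \<in> ?T" using z c by simp
    show "\<And>p. p \<in> ?T \<Longrightarrow> ?f (?g p) = p" using Tt_eq[of lam, OF lam] by auto
  qed
qed

definition tt :: "('m::finite \<Rightarrow> real) \<Rightarrow> complex ^ 'm \<Rightarrow> real" where
  "tt lam z = Tt lam z 1"

definition Nv :: "('m::finite \<Rightarrow> real) \<Rightarrow> complex ^ 'm \<Rightarrow> complex ^ 'm \<Rightarrow> real" where
  "Nv lam x v = (\<Sum>a\<in>UNIV. exp (- 2 * lam a * tt lam x) * inner (x $ a) (v $ a))"
definition Dd :: "('m::finite \<Rightarrow> real) \<Rightarrow> complex ^ 'm \<Rightarrow> real" where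
  "Dd lam x = (\<Sum>a\<in>UNIV. lam a * exp (- 2 * lam a * tt lam x) * inner (x $ a) (x $ a))"

lemma Dd_pos: assumes lam: "\<And>a. lam a > 0" and z: "z \<noteq> 0" shows "Dd lam z > 0"
proof -
  have "gs lam z (tt lam z) = - 2 * Dd lam z"
    by (simp add: gs_def Dd_def sum_distrib_left algebra_simps)
  then show ?thesis using gs_neg[of lam, OF lam z, of "tt lam z"] by simp
qed

lemma tt_deriv:
  fixes x :: "complex ^ 'm::finite"
  assumes lam: "\<And>a. lam a > 0" and x: "x \<noteq> 0"
  shows "(tt lam has_derivative (\<lambda>v. Nv lam x v / Dd lam x)) (at x)"
proof -
  have d0: "((\<lambda>z::complex^'m. (z, 1::real)) has_derivative (\<lambda>h. (h, 0))) (at x)"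
    by (intro has_derivative_Pair has_derivative_ident has_derivative_const)
  have "((\<lambda>z. snd ((\<lambda>p. (fst p, Tt lam (fst p) (snd p))) (z, 1::real))) has_derivative
     (\<lambda>h. snd ((\<lambda>q. (fst q, (snd q - gz lam x (Tt lam x 1) (fst q)) / gs lam x (Tt lam x 1))) (h, 0)))) (at x)"
    by (rule has_derivative_snd[OF has_derivative_compose[OF d0 Tt_has_deriv[of lam, OF lam x]]]) simp
  then have "(tt lam has_derivative (\<lambda>h. - gz lam x (tt lam x) h / gs lam x (tt lam x))) (at x)"
    by (simp add: tt_def[abs_def] tt_def)
  moreover have "(\<lambda>h. - gz lam x (tt lam x) h / gs lam x (tt lam x)) = (\<lambda>v. Nv lam x v / Dd lam x)"
  proof -
    have "gs lam x (tt lam x) = - 2 * Dd lam x"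
      by (simp add: gs_def Dd_def sum_distrib_left algebra_simps)
    moreover have "gz lam x (tt lam x) v = 2 * Nv lam x v" for v
      by (simp add: gz_def Nv_def sum_distrib_left algebra_simps)
    ultimately show ?thesis by (simp add: fun_eq_iff)
  qed
  ultimately show ?thesis by simp
qed

lemma salg_closed:
  fixes B :: "('a::real_normed_vector \<Rightarrow> real) set"
  assumes U: "open U" and sub: "B' \<subseteq> B"
    and B: "\<And>b. b \<in> B' \<Longrightarrow> b differentiable_on U \<and>
               (\<forall>v. \<exists>g\<in>salg B. \<forall>x\<in>U. frechet_derivative b (at x) v = g x)"
    and f: "f \<in> salg B'"
  shows "f differentiable_on U \<and> (\<forall>v. \<exists>h\<in>salg B. \<forall>x\<in>U. frechet_derivative f (at x) v = h x)"
  using f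
proof (induction f rule: salg.induct)
  case (sconst c)
  have "(\<lambda>x. c) differentiable_on U" by simp
  moreover have "\<forall>v. \<exists>h\<in>salg B. \<forall>x\<in>U. frechet_derivative (\<lambda>x. c) (at x) v = h x"
  proof
    fix v show "\<exists>h\<in>salg B. \<forall>x\<in>U. frechet_derivative (\<lambda>x. c) (at x) v = h x"
      by (rule bexI[of _ "\<lambda>x. 0"]) (simp_all add: salg.sconst)
  qed
  ultimately show ?case by blast
next
  case (sbase b)
  then show ?case using B by blast
next
  case (sadd f g)
  have "(\<lambda>x. f x + g x) differentiable_on U" using sadd by (auto intro: differentiable_on_add)
  moreover have "\<exists>h\<in>salg B. \<forall>x\<in>U. frechet_derivative (\<lambda>x. f x + g x) (at x) v = h x" for v
  proof -
    obtain hf where hf: "hf \<in> salg B" "\<forall>x\<in>U. frechet_derivative f (at x) v = hf x" using sadd by blast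
    obtain hg where hg: "hg \<in> salg B" "\<forall>x\<in>U. frechet_derivative g (at x) v = hg x" using sadd by blast
    have "frechet_derivative (\<lambda>x. f x + g x) (at x) v = hf x + hg x" if "x \<in> U" for x
    proof -
      have "f differentiable at x" "g differentiable at x" using sadd that U
        by (auto simp: differentiable_on_eq_differentiable_at)
      then have "((\<lambda>x. f x + g x) has_derivative (\<lambda>v. frechet_derivative f (at x) v + frechet_derivative g (at x) v)) (at x)"
        by (intro has_derivative_add) (auto simp: frechet_derivative_works)
      then have "frechet_derivative (\<lambda>x. f x + g x) (at x) = (\<lambda>v. frechet_derivative f (at x) v + frechet_derivative g (at x) v)"
        by (rule frechet_derivative_at[symmetric])
      then show ?thesis using hf hg that by simp
    qed
    then have "\<forall>x\<in>U. frechet_derivative (\<lambda>x. f x + g x) (at x) v = (\<lambda>x. hf x + hg x) x" by simp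
    then show ?thesis using salg.sadd[OF hf(1) hg(1)] by (rule bexI[where x="\<lambda>x. hf x + hg x"])
  qed
  ultimately show ?case by blast
next
  case (smult f g)
  have "(\<lambda>x. f x * g x) differentiable_on U" using smult by (auto intro: differentiable_on_mult)
  moreover have "\<exists>h\<in>salg B. \<forall>x\<in>U. frechet_derivative (\<lambda>x. f x * g x) (at x) v = h x" for v
  proof -
    obtain hf where hf: "hf \<in> salg B" "\<forall>x\<in>U. frechet_derivative f (at x) v = hf x" using smult by blast
    obtain hg where hg: "hg \<in> salg B" "\<forall>x\<in>U. frechet_derivative g (at x) v = hg x" using smult by blast
    have fB: "f \<in> salg B" "g \<in> salg B" using smult.hyps salg_mono[OF sub] by auto
    have "frechet_derivative (\<lambda>x. f x * g x) (at x) v = f x * hg x + hf x * g x" if "x \<in> U" for x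
    proof -
      have "f differentiable at x" "g differentiable at x" using smult that U
        by (auto simp: differentiable_on_eq_differentiable_at)
      then have "((\<lambda>x. f x * g x) has_derivative (\<lambda>v. f x * frechet_derivative g (at x) v + frechet_derivative f (at x) v * g x)) (at x)"
        by (intro has_derivative_mult) (auto simp: frechet_derivative_works)
      then have "frechet_derivative (\<lambda>x. f x * g x) (at x) = (\<lambda>v. f x * frechet_derivative g (at x) v + frechet_derivative f (at x) v * g x)"
        by (rule frechet_derivative_at[symmetric])
      then show ?thesis using hf hg that by simp
    qed
    moreover have "(\<lambda>x. f x * hg x + hf x * g x) \<in> salg B"
      using fB hf hg by (intro salg.sadd salg.smult) auto
    ultimately show ?thesis by (intro bexI[where x="\<lambda>x. f x * hg x + hf x * g x"]) auto
  qed
  ultimately show ?case by blast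
qed

lemma frechet_apply: "(f has_derivative f') (at x) \<Longrightarrow> frechet_derivative f (at x) v = f' v"
  using frechet_derivative_at by metis

lemma smooth_comp_inner_nth: "open U \<Longrightarrow> smooth_on U (\<lambda>x::complex^'m. inner (x $ a) u)"
  by (rule smooth_linear)
     (auto intro: bounded_linear_compose[OF bounded_linear_inner_left bounded_linear_vec_nth])

lemma smooth_inner_nth_self: "open U \<Longrightarrow> smooth_on U (\<lambda>x::complex^'m. inner (x $ a) (x $ a))"
proof -
  assume U: "open U"
  have re: "smooth_on U (\<lambda>x::complex^'m. Re (x $ a))"
    by (rule smooth_linear[OF _ U]) (rule bounded_linear_compose[OF bounded_linear_Re bounded_linear_vec_nth])
  have im: "smooth_on U (\<lambda>x::complex^'m. Im (x $ a))"
    by (rule smooth_linear[OF _ U]) (rule bounded_linear_compose[OF bounded_linear_Im bounded_linear_vec_nth])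
  have "smooth_on U (\<lambda>x::complex^'m. Re (x $ a) * Re (x $ a) + Im (x $ a) * Im (x $ a))"
    by (intro smooth_add smooth_mult U re im)
  then show ?thesis by (simp add: inner_complex_def)
qed

lemma smooth_tt:
  fixes lam :: "'m::finite \<Rightarrow> real"
  assumes lam: "\<And>a. lam a > 0"
  shows "smooth_on (UNIV - {0}) (tt lam)"
proof -
  let ?W = "UNIV - {0::complex^'m}"
  have W: "open ?W" by auto
  let ?E = "{h. \<exists>\<mu>. h = (\<lambda>z. exp (\<mu> * tt lam z))}"
  let ?S = "{g. smooth_on ?W g}"
  let ?B = "{tt lam} \<union> ?E \<union> {\<lambda>z. inverse (Dd lam z)} \<union> ?S"
  have sE: "(\<lambda>z. exp (\<mu> * tt lam z)) \<in> salg ?B" for \<mu> by (rule sbase) blast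
  have sS: "g \<in> salg ?B" if "smooth_on ?W g" for g by (rule sbase) (use that in blast)
  have sI: "(\<lambda>z. inverse (Dd lam z)) \<in> salg ?B" by (rule sbase) blast
  have Nv_in: "(\<lambda>x. Nv lam x v) \<in> salg ?B" for v
    unfolding Nv_def
    by (intro salg_sum smult sE sS smooth_comp_inner_nth W) simp
  have tfd: "frechet_derivative (tt lam) (at x) v = Nv lam x v * inverse (Dd lam x)" if "x \<in> ?W" for x v
  proof -
    have "frechet_derivative (tt lam) (at x) = (\<lambda>v. Nv lam x v / Dd lam x)"
      using frechet_derivative_at[OF tt_deriv[of lam, OF lam, of x]] that by simp
    then show ?thesis by (simp add: divide_inverse)
  qed
  have tdiff: "tt lam differentiable_on ?W"
    using tt_deriv[of lam, OF lam] W by (auto simp: differentiable_on_eq_differentiable_at differentiable_def)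
  have dtt: "\<exists>g\<in>salg ?B. \<forall>x\<in>?W. frechet_derivative (tt lam) (at x) v = g x" for v
    by (rule salg_exI[where g="\<lambda>x. Nv lam x v * inverse (Dd lam x)"]) (use Nv_in sI tfd in \<open>auto intro: smult\<close>)
  have baseE: "b differentiable_on ?W \<and> (\<forall>v. \<exists>g\<in>salg ?B. \<forall>x\<in>?W. frechet_derivative b (at x) v = g x)"
    if "b \<in> ?E" for b
  proof -
    obtain \<mu> where b: "b = (\<lambda>z. exp (\<mu> * tt lam z))" using \<open>b \<in> ?E\<close> by blast
    have hd: "(b has_derivative (\<lambda>v. exp (\<mu> * tt lam x) * (\<mu> * (Nv lam x v / Dd lam x)))) (at x)" if "x \<in> ?W" for x
      unfolding b using that
      by (auto intro!: derivative_eq_intros tt_deriv[of lam, OF lam])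
    show ?thesis
    proof (intro conjI allI)
      show "b differentiable_on ?W" using hd W by (auto simp: differentiable_on_eq_differentiable_at differentiable_def)
      fix v
      show "\<exists>g\<in>salg ?B. \<forall>x\<in>?W. frechet_derivative b (at x) v = g x"
      proof (rule salg_exI[where g="\<lambda>x. exp (\<mu> * tt lam x) * ((\<lambda>x. \<mu>) x * (Nv lam x v * inverse (Dd lam x)))"])
        show "(\<lambda>x. exp (\<mu> * tt lam x) * ((\<lambda>x. \<mu>) x * (Nv lam x v * inverse (Dd lam x)))) \<in> salg ?B"
          by (intro smult sE sconst Nv_in sI)
        fix x assume x: "x \<in> ?W"
        show "frechet_derivative b (at x) v = exp (\<mu> * tt lam x) * ((\<lambda>x. \<mu>) x * (Nv lam x v * inverse (Dd lam x)))"
          by (simp add: frechet_apply[OF hd[OF x]] divide_inverse)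
      qed
    qed
  qed
  have baseS: "b differentiable_on ?W \<and> (\<forall>v. \<exists>g\<in>salg ?B. \<forall>x\<in>?W. frechet_derivative b (at x) v = g x)"
    if "b \<in> ?S" for b
    using smooth_onD1[of ?W b] smooth_onD2[of ?W b] that by (auto intro!: sbase)
  have Dd_in: "Dd lam \<in> salg (?E \<union> ?S)"
  proof -
    have sE': "(\<lambda>x. exp (- 2 * lam a * tt lam x)) \<in> salg (?E \<union> ?S)" for a
      by (rule sbase, rule UnI1, rule CollectI, rule exI[of _ "-2 * lam a"]) simp
    have sS': "(\<lambda>x. inner (x $ a) (x $ a)) \<in> salg (?E \<union> ?S)" for a
      by (rule sbase, rule UnI2) (simp add: smooth_inner_nth_self W)
    have "(\<lambda>x. \<Sum>a\<in>UNIV. (\<lambda>x. lam a) x * exp (- 2 * lam a * tt lam x) * inner (x $ a) (x $ a)) \<in> salg (?E \<union> ?S)"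
      by (intro salg_sum smult sconst sE' sS') simp
    then show ?thesis by (simp add: Dd_def[abs_def])
  qed
  have Dd_cl: "Dd lam differentiable_on ?W \<and> (\<forall>v. \<exists>h\<in>salg ?B. \<forall>x\<in>?W. frechet_derivative (Dd lam) (at x) v = h x)"
    by (rule salg_closed[OF W _ _ Dd_in]) (use baseE baseS in auto)
  have baseI: "(\<lambda>z. inverse (Dd lam z)) differentiable_on ?W \<and>
      (\<forall>v. \<exists>g\<in>salg ?B. \<forall>x\<in>?W. frechet_derivative (\<lambda>z. inverse (Dd lam z)) (at x) v = g x)"
  proof -
    have hd: "((\<lambda>z. inverse (Dd lam z)) has_derivative
        (\<lambda>v. - (inverse (Dd lam x) * inverse (Dd lam x)) * frechet_derivative (Dd lam) (at x) v)) (at x)"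
      if x: "x \<in> ?W" for x
    proof -
      have d: "(Dd lam has_derivative frechet_derivative (Dd lam) (at x)) (at x)"
        using Dd_cl x W by (auto simp: differentiable_on_eq_differentiable_at frechet_derivative_works)
      have p: "Dd lam x \<noteq> 0" using Dd_pos[of lam, OF lam] x by (metis DiffE less_irrefl singletonI)
      show ?thesis
        by (rule has_derivative_eq_rhs[OF Deriv.has_derivative_inverse[OF p d]]) (simp add: fun_eq_iff)
    qed
    show ?thesis
    proof (intro conjI allI)
      show "(\<lambda>z. inverse (Dd lam z)) differentiable_on ?W"
        using hd W by (auto simp: differentiable_on_eq_differentiable_at differentiable_def)
      fix v
      obtain h where h: "h \<in> salg ?B" "\<forall>x\<in>?W. frechet_derivative (Dd lam) (at x) v = h x" using Dd_cl by blast
      show "\<exists>g\<in>salg ?B. \<forall>x\<in>?W. frechet_derivative (\<lambda>z. inverse (Dd lam z)) (at x) v = g x"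
      proof (rule salg_exI[where g="\<lambda>x. ((\<lambda>x. -1) x * (inverse (Dd lam x) * inverse (Dd lam x))) * h x"])
        show "(\<lambda>x. ((\<lambda>x. -1) x * (inverse (Dd lam x) * inverse (Dd lam x))) * h x) \<in> salg ?B"
          by (intro smult sconst sI h(1))
        fix x assume x: "x \<in> ?W"
        show "frechet_derivative (\<lambda>z. inverse (Dd lam z)) (at x) v = ((\<lambda>x. -1) x * (inverse (Dd lam x) * inverse (Dd lam x))) * h x"
          using frechet_apply[OF hd[OF x]] h(2) x by simp
      qed
    qed
  qed
  show ?thesis
  proof (rule salg_smooth[OF W, of ?B])
    show "tt lam \<in> salg ?B" by (rule sbase) simp
    fix b assume b: "b \<in> ?B"
    show "b differentiable_on ?W \<and> (\<forall>v. \<exists>g\<in>salg ?B. \<forall>x\<in>?W. frechet_derivative b (at x) v = g x)"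
    proof -
      consider "b = tt lam" | "b \<in> ?E" | "b = (\<lambda>z. inverse (Dd lam z))" | "b \<in> ?S" using b by blast
      then show ?thesis
      proof cases
        case 1 then show ?thesis using tdiff dtt by blast
      next
        case 2 then show ?thesis by (rule baseE)
      next
        case 3 then show ?thesis using baseI by simp
      next
        case 4 then show ?thesis by (rule baseS)
      qed
    qed
  qed
qed

definition Pl :: "('m::finite \<Rightarrow> real) \<Rightarrow> complex ^ 'm \<Rightarrow> complex ^ 'm \<Rightarrow> real" where
  "Pl lam x v = (\<Sum>a\<in>UNIV. lam a * exp (- 2 * lam a * tt lam x) * inner (x $ a) (v $ a))"
definition Sw :: "('m::finite \<Rightarrow> real) \<Rightarrow> complex ^ 'm \<Rightarrow> complex ^ 'm \<Rightarrow> complex ^ 'm \<Rightarrow> real" where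
  "Sw lam x w v = (\<Sum>a\<in>UNIV. exp (- 2 * lam a * tt lam x) * inner (w $ a) (v $ a))"
definition El :: "('m::finite \<Rightarrow> real) \<Rightarrow> complex ^ 'm \<Rightarrow> real" where
  "El lam x = (\<Sum>a\<in>UNIV. (lam a)^2 * exp (- 2 * lam a * tt lam x) * inner (x $ a) (x $ a))"

lemma Nv_deriv:
  fixes x :: "complex ^ 'm::finite"
  assumes lam: "\<And>a. lam a > 0" and x: "x \<noteq> 0"
  shows "((\<lambda>y. Nv lam y v) has_derivative (\<lambda>w. Sw lam x w v - 2 * (Nv lam x w / Dd lam x) * Pl lam x v)) (at x)"
proof -
  have "((\<lambda>y. \<Sum>a\<in>UNIV. exp (- 2 * lam a * tt lam y) * inner (y $ a) (v $ a)) has_derivative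
     (\<lambda>w. \<Sum>a\<in>UNIV. exp (- 2 * lam a * tt lam x) * (- 2 * lam a * (Nv lam x w / Dd lam x)) * inner (x $ a) (v $ a)
         + exp (- 2 * lam a * tt lam x) * inner (w $ a) (v $ a))) (at x)"
    apply (rule has_derivative_eq_rhs)
     apply (rule derivative_eq_intros tt_deriv[of lam, OF lam x] refl | simp)+
    apply (simp add: fun_eq_iff algebra_simps)
    done
  moreover have "(\<lambda>w. \<Sum>a\<in>UNIV. exp (- 2 * lam a * tt lam x) * (- 2 * lam a * (Nv lam x w / Dd lam x)) * inner (x $ a) (v $ a)
         + exp (- 2 * lam a * tt lam x) * inner (w $ a) (v $ a)) = (\<lambda>w. Sw lam x w v - 2 * (Nv lam x w / Dd lam x) * Pl lam x v)"
  proof (rule ext)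
    fix w
    define t where "t = Nv lam x w / Dd lam x"
    have "(\<Sum>a\<in>UNIV. exp (- 2 * lam a * tt lam x) * (- 2 * lam a * t) * inner (x $ a) (v $ a)
         + exp (- 2 * lam a * tt lam x) * inner (w $ a) (v $ a)) =
       (\<Sum>a\<in>UNIV. exp (- 2 * lam a * tt lam x) * inner (w $ a) (v $ a) - 2 * t * (lam a * exp (- 2 * lam a * tt lam x) * inner (x $ a) (v $ a)))"
      by (rule sum.cong) (simp_all add: algebra_simps)
    also have "\<dots> = Sw lam x w v - 2 * t * Pl lam x v"
      by (simp add: Sw_def Pl_def sum_subtractf sum_distrib_left)
    finally show "(\<Sum>a\<in>UNIV. exp (- 2 * lam a * tt lam x) * (- 2 * lam a * (Nv lam x w / Dd lam x)) * inner (x $ a) (v $ a)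
         + exp (- 2 * lam a * tt lam x) * inner (w $ a) (v $ a)) = Sw lam x w v - 2 * (Nv lam x w / Dd lam x) * Pl lam x v"
      by (simp add: t_def)
  qed
  ultimately show ?thesis by (simp add: Nv_def[abs_def])
qed

lemma Dd_deriv:
  fixes x :: "complex ^ 'm::finite"
  assumes lam: "\<And>a. lam a > 0" and x: "x \<noteq> 0"
  shows "(Dd lam has_derivative (\<lambda>w. 2 * Pl lam x w - 2 * (Nv lam x w / Dd lam x) * El lam x)) (at x)"
proof -
  have "((\<lambda>y. \<Sum>a\<in>UNIV. lam a * exp (- 2 * lam a * tt lam y) * inner (y $ a) (y $ a)) has_derivative
     (\<lambda>w. \<Sum>a\<in>UNIV. lam a * (exp (- 2 * lam a * tt lam x) * (- 2 * lam a * (Nv lam x w / Dd lam x)) * inner (x $ a) (x $ a)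
         + exp (- 2 * lam a * tt lam x) * (2 * inner (x $ a) (w $ a))))) (at x)"
    apply (rule has_derivative_eq_rhs)
     apply (rule derivative_eq_intros tt_deriv[of lam, OF lam x] refl | simp)+
    apply (simp add: fun_eq_iff algebra_simps inner_commute)
    done
  moreover have "(\<lambda>w. \<Sum>a\<in>UNIV. lam a * (exp (- 2 * lam a * tt lam x) * (- 2 * lam a * (Nv lam x w / Dd lam x)) * inner (x $ a) (x $ a)
         + exp (- 2 * lam a * tt lam x) * (2 * inner (x $ a) (w $ a)))) = (\<lambda>w. 2 * Pl lam x w - 2 * (Nv lam x w / Dd lam x) * El lam x)"
  proof (rule ext)
    fix w
    define t where "t = Nv lam x w / Dd lam x"
    have "(\<Sum>a\<in>UNIV. lam a * (exp (- 2 * lam a * tt lam x) * (- 2 * lam a * t) * inner (x $ a) (x $ a)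
         + exp (- 2 * lam a * tt lam x) * (2 * inner (x $ a) (w $ a)))) =
       (\<Sum>a\<in>UNIV. 2 * (lam a * exp (- 2 * lam a * tt lam x) * inner (x $ a) (w $ a)) - 2 * t * ((lam a)^2 * exp (- 2 * lam a * tt lam x) * inner (x $ a) (x $ a)))"
      by (rule sum.cong) (simp_all add: algebra_simps power2_eq_square)
    also have "\<dots> = 2 * Pl lam x w - 2 * t * El lam x"
      by (simp add: El_def Pl_def sum_subtractf sum_distrib_left)
    finally show "(\<Sum>a\<in>UNIV. lam a * (exp (- 2 * lam a * tt lam x) * (- 2 * lam a * (Nv lam x w / Dd lam x)) * inner (x $ a) (x $ a)
         + exp (- 2 * lam a * tt lam x) * (2 * inner (x $ a) (w $ a)))) = 2 * Pl lam x w - 2 * (Nv lam x w / Dd lam x) * El lam x"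
      by (simp add: t_def)
  qed
  ultimately show ?thesis by (simp add: Dd_def[abs_def])
qed

lemma hess_tt:
  fixes x :: "complex ^ 'm::finite"
  assumes lam: "\<And>a. lam a > 0" and x: "x \<noteq> 0"
  shows "hess (tt lam) x v v = (Sw lam x v v - 4 * (Nv lam x v / Dd lam x) * Pl lam x v
      + 2 * (Nv lam x v / Dd lam x)^2 * El lam x) / Dd lam x"
proof -
  have V: "open (UNIV - {0::complex^'m})" "x \<in> UNIV - {0}" using x by auto
  have D: "Dd lam x > 0" using Dd_pos[of lam, OF lam x] .
  have "hess (tt lam) x v = (\<lambda>w. - Nv lam x v * (inverse (Dd lam x) * (2 * Pl lam x w - 2 * (Nv lam x w / Dd lam x) * El lam x) * inverse (Dd lam x))
      + (Sw lam x w v - 2 * (Nv lam x w / Dd lam x) * Pl lam x v) / Dd lam x)"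
  proof (rule hess_eq[OF V])
    show "\<And>y. y \<in> UNIV - {0} \<Longrightarrow> (tt lam has_derivative (\<lambda>v. Nv lam y v / Dd lam y)) (at y)"
      using tt_deriv[of lam, OF lam] by auto
    show "((\<lambda>y. Nv lam y v / Dd lam y) has_derivative (\<lambda>w. - Nv lam x v * (inverse (Dd lam x) * (2 * Pl lam x w - 2 * (Nv lam x w / Dd lam x) * El lam x) * inverse (Dd lam x))
      + (Sw lam x w v - 2 * (Nv lam x w / Dd lam x) * Pl lam x v) / Dd lam x)) (at x)"
      using has_derivative_divide[OF Nv_deriv[of lam, OF lam x] Dd_deriv[of lam, OF lam x]] D by simp
  qed
  then have "hess (tt lam) x v v = - Nv lam x v * (inverse (Dd lam x) * (2 * Pl lam x v - 2 * (Nv lam x v / Dd lam x) * El lam x) * inverse (Dd lam x))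
      + (Sw lam x v v - 2 * (Nv lam x v / Dd lam x) * Pl lam x v) / Dd lam x" by simp
  also have "\<dots> = (Sw lam x v v - 4 * (Nv lam x v / Dd lam x) * Pl lam x v
      + 2 * (Nv lam x v / Dd lam x)^2 * El lam x) / Dd lam x"
    using D by (simp add: field_simps power2_eq_square)
  finally show ?thesis .
qed

lemma tt_frechet:
  fixes x :: "complex ^ 'm::finite"
  assumes lam: "\<And>a. lam a > 0" and x: "x \<noteq> 0"
  shows "frechet_derivative (tt lam) (at x) v = Nv lam x v / Dd lam x"
  by (rule frechet_apply[OF tt_deriv[of lam, OF lam x]])

lemma smooth_exp2: "smooth_on UNIV (\<lambda>y::real. exp (2 * y))"
proof -
  have "smooth_on UNIV (\<lambda>y::real. exp (2 * y + 0))"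
    by (rule smooth_compose[OF _ _ smooth_exp smooth_affine[of 2 0]]) auto
  then show ?thesis by simp
qed

lemma deriv_exp2: "deriv (\<lambda>y::real. exp (2 * y)) = (\<lambda>y. 2 * exp (2 * y))"
proof
  fix y :: real
  have "((\<lambda>y::real. exp (2 * y)) has_real_derivative exp (2 * y) * 2) (at y)"
    by (auto intro!: derivative_eq_intros)
  then show "deriv (\<lambda>y::real. exp (2 * y)) y = 2 * exp (2 * y)" by (simp add: DERIV_imp_deriv mult.commute)
qed

lemma deriv_deriv_exp2: "deriv (deriv (\<lambda>y::real. exp (2 * y))) = (\<lambda>y. 4 * exp (2 * y))"
proof
  fix y :: real
  have "((\<lambda>y::real. 2 * exp (2 * y)) has_real_derivative 2 * (exp (2 * y) * 2)) (at y)"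
    by (auto intro!: derivative_eq_intros)
  then show "deriv (deriv (\<lambda>y::real. exp (2 * y))) y = 4 * exp (2 * y)" by (simp add: deriv_exp2 DERIV_imp_deriv)
qed

lemma smooth_r2:
  fixes lam :: "'m::finite \<Rightarrow> real"
  assumes lam: "\<And>a. lam a > 0"
  shows "smooth_on (UNIV - {0}) (\<lambda>z. exp (2 * tt lam z))"
  by (rule smooth_compose[OF _ _ smooth_exp2 smooth_tt[of lam, OF lam]]) auto

lemma hess_r2:
  fixes x :: "complex ^ 'm::finite"
  assumes lam: "\<And>a. lam a > 0" and x: "x \<noteq> 0"
  shows "hess (\<lambda>z. exp (2 * tt lam z)) x v v = exp (2 * tt lam x) * (4 * (Nv lam x v / Dd lam x)^2 + 2 * hess (tt lam) x v v)"
proof -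
  have V: "open (UNIV - {0::complex^'m})" "x \<in> UNIV - {0}" using x by auto
  note h = hess_comp[OF V smooth_tt[of lam, OF lam] smooth_exp2, of v v, unfolded deriv_deriv_exp2, unfolded deriv_exp2]
  show ?thesis
    using h tt_frechet[of lam, OF lam x]
    by (simp add: power2_eq_square algebra_simps)
qed

lemma key_ineq:
  fixes D E S P1 P2 t1 t2 :: real
  assumes D: "D > 0" and E: "E \<ge> 0" and S: "S > 0" and Q: "P1^2 + P2^2 \<le> E * S"
  shows "0 < 4 * t1^2 + 2 * ((S - 4 * t1 * P1 + 2 * t1^2 * E) / D) + 4 * t2^2 + 2 * ((S - 4 * t2 * P2 + 2 * t2^2 * E) / D)"
proof -
  define T where "T = t1^2 + t2^2"
  define X where "X = t1 * P1 + t2 * P2"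
  have T0: "T \<ge> 0" by (simp add: T_def)
  have lag: "T * (P1^2 + P2^2) - X^2 = (t1 * P2 - t2 * P1)^2"
    by (simp add: T_def X_def power2_eq_square algebra_simps)
  have a: "X^2 \<le> T * (P1^2 + P2^2)" using lag by (metis diff_ge_0_iff_ge zero_le_power2)
  have b: "X^2 \<le> T * (E * S)" using a mult_left_mono[OF Q T0] by linarith
  have c: "(2 * X)^2 \<le> (E * T + S)^2"
  proof -
    have "(E * T + S)^2 - 4 * (T * (E * S)) = (E * T - S)^2" by (simp add: power2_eq_square algebra_simps)
    then have "4 * (T * (E * S)) \<le> (E * T + S)^2" by (metis diff_ge_0_iff_ge zero_le_power2)
    then show ?thesis using b by (simp add: power_mult_distrib)
  qed
  have ETS: "0 \<le> E * T + S" using E T0 S by simp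
  have d: "2 * X \<le> E * T + S"
    using power2_le_imp_le[OF c ETS] .
  have main: "0 < D * T + (S + E * T - 2 * X)"
  proof (cases "T = 0")
    case True
    then have "t1 = 0" "t2 = 0" by (auto simp: T_def add_nonneg_eq_0_iff)
    then show ?thesis using S True by (simp add: X_def)
  next
    case False
    then have "D * T > 0" using D T0 by simp
    then show ?thesis using d by linarith
  qed
  have "4 * t1^2 + 2 * ((S - 4 * t1 * P1 + 2 * t1^2 * E) / D) + 4 * t2^2 + 2 * ((S - 4 * t2 * P2 + 2 * t2^2 * E) / D)
      = (4 / D) * (D * T + (S + E * T - 2 * X))"
    using D by (simp add: T_def X_def field_simps)
  also have "\<dots> > 0" using main D by simp
  finally show ?thesis .
qed

lemma Sw_Jc: "Sw lam x (Jc v) (Jc v) = Sw lam x v v"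
  by (simp add: Sw_def Jc_def inner_complex_def algebra_simps)

lemma Sw_pos:
  assumes v: "v \<noteq> 0" shows "Sw lam x v v > 0"
proof -
  obtain b where b: "v $ b \<noteq> 0" using nonzero_comp[OF v] by blast
  show ?thesis unfolding Sw_def
    by (rule sum_pos2[where i=b]) (use b in auto)
qed

lemma El_nonneg: "El lam x \<ge> 0"
  unfolding El_def by (intro sum_nonneg) simp

lemma weighted_bessel:
  fixes x v :: "complex ^ 'm::finite"
  assumes lam: "\<And>a. lam a > 0"
  shows "(Pl lam x v)^2 + (Pl lam x (Jc v))^2 \<le> El lam x * Sw lam x v v"
proof -
  define al where "al a = exp (- 2 * lam a * tt lam x)" for a
  have al: "sqrt (al a) * sqrt (al a) = al a" for a by (simp add: al_def)
  have ala: "\<bar>al a\<bar> = al a" for a by (simp add: al_def)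
  define Zw where "Zw = (\<chi> a. (lam a * sqrt (al a)) *\<^sub>R (x $ a))"
  define Vw where "Vw = (\<chi> a. sqrt (al a) *\<^sub>R (v $ a))"
  have b: "(inner Zw Vw)^2 + (inner Zw (Jc Vw))^2 \<le> inner Zw Zw * inner Vw Vw"
    by (rule bessel2) (simp_all add: inner_Jc_self inner_Jc_Jc)
  have "inner Zw Vw = Pl lam x v"
    unfolding Pl_def inner_vec_def Zw_def Vw_def
    by (rule sum.cong) (simp_all add: al_def[symmetric] algebra_simps ala, simp add: al_def)
  moreover have "inner Zw (Jc Vw) = Pl lam x (Jc v)"
    unfolding Pl_def inner_vec_def Zw_def Vw_def Jc_def
    by (rule sum.cong) (simp_all add: al_def[symmetric] scaleR_conv_of_real algebra_simps inner_complex_def ala, (simp add: al_def algebra_simps)?)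
  moreover have "inner Zw Zw = El lam x"
    unfolding El_def inner_vec_def Zw_def
    by (rule sum.cong) (simp_all add: al_def[symmetric] power2_eq_square algebra_simps ala, (simp add: al_def algebra_simps)?)
  moreover have "inner Vw Vw = Sw lam x v v"
    unfolding Sw_def inner_vec_def Vw_def
    by (rule sum.cong) (simp_all add: al_def[symmetric] algebra_simps ala, (simp add: al_def algebra_simps)?)
  ultimately show ?thesis using b by simp
qed

lemma levi_r2_pos:
  fixes x v :: "complex ^ 'm::finite"
  assumes lam: "\<And>a. lam a > 0" and x: "x \<noteq> 0" and v: "v \<noteq> 0"
  shows "levi (\<lambda>z. exp (2 * tt lam z)) x v > 0"
proof -
  have D: "Dd lam x > 0" by (rule Dd_pos[of lam, OF lam x])
  have k: "0 < 4 * (Nv lam x v / Dd lam x)^2 + 2 * ((Sw lam x v v - 4 * (Nv lam x v / Dd lam x) * Pl lam x v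
      + 2 * (Nv lam x v / Dd lam x)^2 * El lam x) / Dd lam x)
      + 4 * (Nv lam x (Jc v) / Dd lam x)^2 + 2 * ((Sw lam x v v - 4 * (Nv lam x (Jc v) / Dd lam x) * Pl lam x (Jc v)
      + 2 * (Nv lam x (Jc v) / Dd lam x)^2 * El lam x) / Dd lam x)"
    by (rule key_ineq[OF D El_nonneg Sw_pos[OF v] weighted_bessel[of lam, OF lam]])
  have "levi (\<lambda>z. exp (2 * tt lam z)) x v = exp (2 * tt lam x) * (4 * (Nv lam x v / Dd lam x)^2 + 2 * ((Sw lam x v v - 4 * (Nv lam x v / Dd lam x) * Pl lam x v
      + 2 * (Nv lam x v / Dd lam x)^2 * El lam x) / Dd lam x)
      + 4 * (Nv lam x (Jc v) / Dd lam x)^2 + 2 * ((Sw lam x v v - 4 * (Nv lam x (Jc v) / Dd lam x) * Pl lam x (Jc v)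
      + 2 * (Nv lam x (Jc v) / Dd lam x)^2 * El lam x) / Dd lam x))"
    unfolding levi_def hess_r2[of lam, OF lam x] hess_tt[of lam, OF lam x] Sw_Jc
    by (simp add: algebra_simps)
  also have "\<dots> > 0" using k by simp
  finally show ?thesis .
qed

lemma lflow_nth: "lflow lam s z $ a = complex_of_real (exp (lam a * s)) * z $ a"
  by (simp add: lflow_def)

lemma lflow_add: "lflow lam a (lflow lam b z) = lflow lam (a + b) z"
  by (simp add: lflow_def vec_eq_iff algebra_simps exp_add)

lemma lflow_0: "lflow lam 0 z = z"
  by (simp add: lflow_def vec_eq_iff)

lemma lflow_nonzero: "z \<noteq> 0 \<Longrightarrow> lflow lam s z \<noteq> 0"
  by (auto simp: lflow_def vec_eq_iff)

lemma lflow_eq_0: "lflow lam s z = 0 \<longleftrightarrow> z = 0"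
  by (auto simp: lflow_def vec_eq_iff)

lemma Gf_lflow: "Gf lam (lflow lam s z) u = Gf lam z (u - s)"
proof -
  have "exp (- 2 * lam a * u) * inner (lflow lam s z $ a) (lflow lam s z $ a) =
        exp (- 2 * lam a * (u - s)) * inner (z $ a) (z $ a)" for a
  proof -
    have "inner (lflow lam s z $ a) (lflow lam s z $ a) = (exp (lam a * s))^2 * inner (z $ a) (z $ a)"
      by (simp add: lflow_nth inner_complex_def power2_eq_square algebra_simps)
    moreover have "exp (- 2 * lam a * u) * (exp (lam a * s))^2 = exp (- 2 * lam a * (u - s))"
      by (simp add: power2_eq_square exp_add[symmetric] algebra_simps)
    ultimately show ?thesis by (simp add: mult.assoc[symmetric])
  qed
  then show ?thesis by (simp add: Gf_def)
qed

lemma tt_lflow: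
  assumes lam: "\<And>a. lam a > 0" and z: "z \<noteq> 0"
  shows "tt lam (lflow lam s z) = tt lam z + s"
proof -
  have "Gf lam (lflow lam s z) (tt lam z + s) = 1"
    by (simp add: Gf_lflow tt_def Tt_eq[of lam, OF lam z])
  then show ?thesis unfolding tt_def by (rule Tt_unique[of lam, OF lam lflow_nonzero[OF z]])
qed

lemma tt_sphere:
  assumes lam: "\<And>a. lam a > 0" and z: "norm z = 1"
  shows "tt lam z = 0"
proof -
  have z0: "z \<noteq> 0" using z by auto
  have "inner z z = 1" using z by (simp add: dot_square_norm)
  then have "Gf lam z 0 = 1" by (simp add: Gf_zero_s)
  then show ?thesis unfolding tt_def by (rule Tt_unique[of lam, OF lam z0])
qed

lemma tt_Gf: "(\<And>a. lam a > 0) \<Longrightarrow> z \<noteq> 0 \<Longrightarrow> Gf lam z (tt lam z) = 1"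
  unfolding tt_def by (rule Tt_eq) auto

lemma r_lambda_eq:
  fixes lam :: "'m::finite \<Rightarrow> real"
  assumes lam: "\<And>a. lam a > 0" and z: "z \<noteq> 0"
  shows "r_lambda lam z = exp (tt lam z)"
proof -
  define r0 where "r0 z = (if z = 0 then 0 else exp (tt lam z))" for z :: "complex ^ 'm"
  have P: "r0 0 = 0 \<and> (\<forall>z. z \<noteq> 0 \<longrightarrow> r0 z > 0) \<and> (\<forall>z. norm z = 1 \<longrightarrow> r0 z = 1) \<and>
       (\<forall>s z. z \<noteq> 0 \<longrightarrow> r0 (lflow lam s z) = exp s * r0 z)"
    using tt_sphere[of lam, OF lam] tt_lflow[of lam, OF lam]
    by (auto simp: r0_def exp_add lflow_eq_0)
  have U: "r = r0" if r: "r 0 = 0 \<and> (\<forall>z. z \<noteq> 0 \<longrightarrow> r z > 0) \<and> (\<forall>z. norm z = 1 \<longrightarrow> r z = 1) \<and>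
       (\<forall>s z. z \<noteq> 0 \<longrightarrow> r (lflow lam s z) = exp s * r z)" for r
  proof
    fix z :: "complex ^ 'm"
    show "r z = r0 z"
    proof (cases "z = 0")
      case True then show ?thesis using r by (simp add: r0_def)
    next
      case False
      define w where "w = lflow lam (- tt lam z) z"
      have w0: "w \<noteq> 0" using lflow_nonzero[OF False] by (simp add: w_def)
      have "inner w w = Gf lam w 0" by (simp add: Gf_zero_s)
      also have "\<dots> = Gf lam z (tt lam z)" by (simp add: w_def Gf_lflow)
      also have "\<dots> = 1" by (rule tt_Gf[of lam, OF lam False])
      finally have "norm w = 1" by (simp add: norm_eq_sqrt_inner)
      then have rw: "r w = 1" using r by blast
      have "z = lflow lam (tt lam z) w" by (simp add: w_def lflow_add lflow_0)
      then have "r z = exp (tt lam z) * r w" using r w0 by metis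
      then show ?thesis using rw False by (simp add: r0_def)
    qed
  qed
  have "r_lambda lam = r0" unfolding r_lambda_def
    by (rule the_equality[where P="\<lambda>r. r 0 = 0 \<and> (\<forall>z. z \<noteq> 0 \<longrightarrow> r z > 0) \<and> (\<forall>z. norm z = 1 \<longrightarrow> r z = 1) \<and>
       (\<forall>s z. z \<noteq> 0 \<longrightarrow> r (lflow lam s z) = exp s * r z)", OF P U]) assumption
  then show ?thesis using z by (simp add: r0_def)
qed

lemma r_lambda_sq:
  fixes lam :: "'m::finite \<Rightarrow> real"
  assumes lam: "\<And>a. lam a > 0" and z: "z \<noteq> 0"
  shows "(r_lambda lam z)^2 = exp (2 * tt lam z)"
  using r_lambda_eq[of lam, OF lam z] by (simp add: power2_eq_square exp_add[symmetric])

lemma tt_le0: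
  assumes lam: "\<And>a. lam a > 0" and z: "z \<noteq> 0" and n: "norm z \<le> 1"
  shows "tt lam z \<le> 0"
proof (rule ccontr)
  assume "\<not> tt lam z \<le> 0"
  then have "Gf lam z (tt lam z) < Gf lam z 0" by (intro Gf_strict_dec[of lam, OF lam z]) simp
  moreover have "Gf lam z 0 \<le> 1" using n by (simp add: Gf_zero_s dot_square_norm power_le_one)
  ultimately show False using tt_Gf[of lam, OF lam z] by simp
qed

lemma levi_local:
  assumes "open V" "x \<in> V" "\<And>y. y \<in> V \<Longrightarrow> f y = g y"
  shows "levi f x v = levi g x v"
  unfolding levi_def using hess_local[OF assms] by simp

lemma levi_add:
  assumes "open V" "x \<in> V" "smooth_on V f" "smooth_on V g"
  shows "levi (\<lambda>y. f y + g y) x v = levi f x v + levi g x v"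
  unfolding levi_def using hess_add[OF assms] by simp

lemma levi_cmult:
  assumes "open V" "x \<in> V" "smooth_on V f"
  shows "levi (\<lambda>y. c * f y) x v = c * levi f x v"
  unfolding levi_def using hess_cmult[OF assms] by (simp add: algebra_simps)

lemma smooth_nu_comp: "open V \<Longrightarrow> smooth_on V g \<Longrightarrow> smooth_on V (\<lambda>y. nu (g y))"
  by (rule smooth_compose[OF _ _ smooth_nu]) auto

lemma levi_Mx:
  assumes V: "open V" "x \<in> V" and a: "smooth_on V a" and b: "smooth_on V b" and w: "w > 0"
    and La: "levi a x v > 0" and Lb: "levi b x v > 0"
  shows "levi (\<lambda>y. b y + w * nu ((1/w) * a y + (-1/w) * b y)) x v > 0"
proof -
  let ?g = "\<lambda>y. (1/w) * a y + (-1/w) * b y"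
  have sa: "smooth_on V (\<lambda>y. (1/w) * a y)" by (rule smooth_cmult[OF V(1) a])
  have sb: "smooth_on V (\<lambda>y. (-1/w) * b y)" by (rule smooth_cmult[OF V(1) b])
  have g: "smooth_on V ?g" by (rule smooth_add[OF V(1) sa sb])
  have ng: "smooth_on V (\<lambda>y. nu (?g y))" by (rule smooth_nu_comp[OF V(1) g])
  have wng: "smooth_on V (\<lambda>y. w * nu (?g y))" by (rule smooth_cmult[OF V(1) ng])
  have hg: "hess ?g x u u = (1/w) * hess a x u u + (-1/w) * hess b x u u" for u
  proof -
    have "hess ?g x u u = hess (\<lambda>y. (1/w) * a y) x u u + hess (\<lambda>y. (-1/w) * b y) x u u"
      by (rule hess_add[OF V sa sb])
    also have "\<dots> = (1/w) * hess a x u u + (-1/w) * hess b x u u"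
      by (simp only: hess_cmult[OF V a] hess_cmult[OF V b])
    finally show ?thesis .
  qed
  have hn: "hess (\<lambda>y. nu (?g y)) x u u = deriv (deriv nu) (?g x) * (frechet_derivative ?g (at x) u)^2
      + deriv nu (?g x) * hess ?g x u u" for u
    using hess_comp[OF V g smooth_nu, of u u] by (simp add: power2_eq_square)
  define d1 where "d1 = deriv nu (?g x)"
  define d2 where "d2 = deriv (deriv nu) (?g x)"
  have d1: "0 \<le> d1" "d1 \<le> 1" using nu_d1_bounds by (auto simp: d1_def)
  have d2: "0 \<le> d2" using nu_d2_nonneg by (simp add: d2_def)
  have "levi (\<lambda>y. b y + w * nu (?g y)) x v = levi b x v + w * levi (\<lambda>y. nu (?g y)) x v"
    using levi_add[OF V b wng] levi_cmult[OF V ng] by simp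
  also have "levi (\<lambda>y. nu (?g y)) x v = d2 * ((frechet_derivative ?g (at x) v)^2 + (frechet_derivative ?g (at x) (Jc v))^2)
      + d1 * ((1/w) * levi a x v + (-1/w) * levi b x v)"
    unfolding levi_def hn hg d1_def[symmetric] d2_def[symmetric] by (simp add: algebra_simps)
  finally have eq: "levi (\<lambda>y. b y + w * nu (?g y)) x v =
      (1 - d1) * levi b x v + d1 * levi a x v + w * d2 * ((frechet_derivative ?g (at x) v)^2 + (frechet_derivative ?g (at x) (Jc v))^2)"
    using w by (simp add: algebra_simps)
  define m where "m = min (levi a x v) (levi b x v)"
  have m: "m > 0" using La Lb by (simp add: m_def)
  have "(1 - d1) * m \<le> (1 - d1) * levi b x v" using d1 by (intro mult_left_mono) (auto simp: m_def)
  moreover have "d1 * m \<le> d1 * levi a x v" using d1 by (intro mult_left_mono) (auto simp: m_def)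
  moreover have "0 \<le> w * d2 * ((frechet_derivative ?g (at x) v)^2 + (frechet_derivative ?g (at x) (Jc v))^2)"
    using w d2 by simp
  ultimately have "m \<le> levi (\<lambda>y. b y + w * nu (?g y)) x v" unfolding eq by (simp add: algebra_simps)
  then show ?thesis using m by simp
qed

lemma choose_A:
  fixes c K1 K2 B :: real
  assumes c: "c > 0" and B: "B > 0"
  shows "\<exists>A. 0 < A \<and> A \<le> B \<and> A * (K1 + K2 * (- ln ((A / (2 * exp 2))^2))) < c"
proof -
  define C :: real where "C = 2 * exp 2"
  have C: "C > 0" by (simp add: C_def)
  have l1: "((\<lambda>A::real. A * ln A) \<longlongrightarrow> 0) (at_right 0)" by real_asymp
  have l2: "((\<lambda>A::real. A * (K1 + 2 * K2 * ln C) - 2 * K2 * (A * ln A)) \<longlongrightarrow> 0 * (K1 + 2 * K2 * ln C) - 2 * K2 * 0) (at_right 0)"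
    by (intro tendsto_intros l1)
  have ev: "\<forall>\<^sub>F A in at_right (0::real). A * (K1 + K2 * (- ln ((A / C)^2))) = A * (K1 + 2 * K2 * ln C) - 2 * K2 * (A * ln A)"
  proof -
    have "\<forall>\<^sub>F A in at_right (0::real). A > 0" by (simp add: eventually_at_right_less)
    then show ?thesis
    proof eventually_elim
      case (elim A)
      then have h: "ln ((A / C)^2) = 2 * ln A - 2 * ln C" using C by (simp add: ln_div ln_realpow)
      show ?case by (simp only: h) (simp add: algebra_simps)
    qed
  qed
  have l3: "((\<lambda>A::real. A * (K1 + K2 * (- ln ((A / C)^2)))) \<longlongrightarrow> 0) (at_right 0)"
    using Lim_transform_eventually[OF l2 eventually_mono[OF ev]] by (simp add: eq_commute)
  have e1: "\<forall>\<^sub>F A in at_right (0::real). A * (K1 + K2 * (- ln ((A / C)^2))) < c"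
    using order_tendstoD(2)[OF l3 c] .
  have e2: "\<forall>\<^sub>F A in at_right (0::real). 0 < A \<and> A \<le> B"
  proof -
    have "\<forall>\<^sub>F A in at_right (0::real). A > 0" by (simp add: eventually_at_right_less)
    moreover have "\<forall>\<^sub>F A in at_right (0::real). A < B"
      using B by (subst eventually_at_right[OF B]) (intro exI[of _ B], auto)
    ultimately show ?thesis by eventually_elim auto
  qed
  have "\<forall>\<^sub>F A in at_right (0::real). (0 < A \<and> A \<le> B) \<and> A * (K1 + K2 * (- ln ((A / C)^2))) < c"
    using e1 e2 by eventually_elim auto
  then obtain A where "(0 < A \<and> A \<le> B) \<and> A * (K1 + K2 * (- ln ((A / C)^2))) < c"
    using eventually_happens[of _ "at_right (0::real)"] by (auto simp: trivial_limit_at_right_real)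
  then show ?thesis unfolding C_def by blast
qed

lemma small_o:
  fixes p :: "'a::real_normed_vector \<Rightarrow> real"
  assumes dp: "(p has_derivative (\<lambda>v. 0)) (at 0)" and p0: "p 0 = 0"
  shows "\<exists>\<eta>>0. \<forall>z. norm z \<le> \<eta> \<longrightarrow> \<bar>p z\<bar> \<le> norm z"
proof -
  have "((\<lambda>h. norm (p (0 + h) - p 0 - 0) / norm h) \<longlongrightarrow> 0) (at 0)"
    using dp by (simp add: has_derivative_at)
  then have "((\<lambda>h. \<bar>p h\<bar> / norm h) \<longlongrightarrow> 0) (at 0)" using p0 by simp
  then have "\<forall>\<^sub>F h in at 0. \<bar>p h\<bar> / norm h < 1" by (rule order_tendstoD) simp
  then obtain d where d: "d > 0" "\<And>h. h \<noteq> 0 \<Longrightarrow> dist h 0 < d \<Longrightarrow> \<bar>p h\<bar> / norm h < 1"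
    unfolding eventually_at by blast
  show ?thesis
  proof (intro exI[of _ "d/2"] conjI allI impI)
    show "d / 2 > 0" using d by simp
    fix z :: 'a assume z: "norm z \<le> d / 2"
    show "\<bar>p z\<bar> \<le> norm z"
    proof (cases "z = 0")
      case True then show ?thesis using p0 by simp
    next
      case False
      then have "\<bar>p z\<bar> / norm z < 1" using d z by auto
      then show ?thesis using False by (simp add: divide_less_eq)
    qed
  qed
qed

theorem lemma4p5:
  fixes lam :: "'m::finite \<Rightarrow> real"
    and U :: "(complex ^ 'm) set"
    and p :: "complex ^ 'm \<Rightarrow> real"
  assumes lam: "\<And>a. 0 < lam a \<and> lam a < 1"
    and U: "open U" "0 \<in> U"
    and p_smooth: "smooth_on U p"
    and p_psh: "strictly_psh_on U p"
    and p0: "p 0 = 0"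
    and dp0: "(p has_derivative (\<lambda>v. 0)) (at 0)"
  shows "\<exists>\<epsilon>>0. \<exists>q :: complex ^ 'm \<Rightarrow> real.
           smooth_on (U - {0}) q \<and> strictly_psh_on (U - {0}) q \<and>
           (\<exists>K N. compact K \<and> K \<subseteq> U \<and> 0 \<in> interior K \<and>
                  (\<forall>z\<in>U - K. q z = p z) \<and>
                  open N \<and> 0 \<in> N \<and> N \<subseteq> K \<and>
                  (\<forall>z\<in>N - {0}. q z = \<epsilon> * (r_lambda lam z)\<^sup>2))"
proof -
  have lp: "\<And>a. lam a > 0" using lam by blast
  obtain e0 where e0: "e0 > 0" "ball 0 e0 \<subseteq> U" using U open_contains_ball by blast
  define \<rho> where "\<rho> = min (e0 / 2) 1"
  have \<rho>: "0 < \<rho>" "\<rho> \<le> 1" using e0 by (auto simp: \<rho>_def)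
  have cbU: "cball 0 \<rho> \<subseteq> U" using e0 by (intro subset_trans[OF _ e0(2)]) (auto simp: \<rho>_def)
  have ppos: "\<And>x v. x \<in> cball 0 \<rho> \<Longrightarrow> v \<noteq> 0 \<Longrightarrow> levi p x v > 0"
    using p_psh cbU by (auto simp: strictly_psh_on_levi)
  obtain c where c: "c > 0" "\<forall>x\<in>cball 0 \<rho>. \<forall>v. c * (norm v)^2 \<le> levi p x v"
    using levi_pos[OF U(1) p_smooth compact_cball cbU ppos] by blast
  define chi where "chi z = sig ((\<rho>^2 - inner z z) * (4 / (3 * \<rho>^2)))" for z :: "complex ^ 'm"
  have chi_sm: "smooth_on UNIV chi"
  proof -
    have aff: "smooth_on UNIV (\<lambda>z::complex^'m. (4 / (3 * \<rho>^2)) * (\<rho>^2 + (-1) * inner z z))"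
      by (intro smooth_cmult smooth_add smooth_const smooth_inner_self) auto
    have "smooth_on UNIV (\<lambda>z::complex^'m. sig ((4 / (3 * \<rho>^2)) * (\<rho>^2 + (-1) * inner z z)))"
      by (rule smooth_compose[OF _ _ smooth_sig aff]) auto
    moreover have "chi = (\<lambda>z. sig ((4 / (3 * \<rho>^2)) * (\<rho>^2 + (-1) * inner z z)))"
      by (auto simp: chi_def fun_eq_iff algebra_simps)
    ultimately show ?thesis by simp
  qed
  have chi1: "chi z = 1" if "norm z \<le> \<rho> / 2" for z
  proof -
    have "(norm z)^2 \<le> (\<rho>/2)^2" by (rule power_mono) (use that in simp_all)
    then have "inner z z \<le> \<rho>^2 / 4" by (simp add: dot_square_norm power_divide)
    then have "(\<rho>^2 - inner z z) * (4 / (3 * \<rho>^2)) \<ge> 1" using \<rho> by (simp add: field_simps)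
    then show ?thesis by (simp add: chi_def sig_1)
  qed
  have chi0: "chi z = 0" if "norm z \<ge> \<rho>" for z
  proof -
    have "\<rho>^2 \<le> (norm z)^2" by (rule power_mono) (use that \<rho> in simp_all)
    then have "inner z z \<ge> \<rho>^2" by (simp add: dot_square_norm)
    then have "(\<rho>^2 - inner z z) * (4 / (3 * \<rho>^2)) \<le> 0" using \<rho>
      by (intro mult_nonpos_nonneg) auto
    then show ?thesis by (simp add: chi_def sig_0)
  qed
  define f1 where "f1 z = chi z * ell z" for z :: "complex ^ 'm"
  have f1_sm: "smooth_on (UNIV - {0}) f1"
    unfolding f1_def[abs_def]
    by (rule smooth_mult[OF _ smooth_subset[OF chi_sm] smooth_ell]) auto
  obtain K2 where K2: "K2 \<ge> 0" "\<forall>x\<in>cball 0 \<rho>. \<forall>v. - K2 * (norm v)^2 \<le> levi chi x v"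
    using levi_lower[OF open_UNIV chi_sm compact_cball] by blast
  obtain K1 where K1: "K1 \<ge> 0" "\<forall>x\<in>cball 0 \<rho> - ball 0 (\<rho>/2). \<forall>v. - K1 * (norm v)^2 \<le> levi f1 x v"
  proof -
    have "compact (cball (0::complex^'m) \<rho> - ball 0 (\<rho>/2))" by (intro compact_diff) auto
    moreover have "cball (0::complex^'m) \<rho> - ball 0 (\<rho>/2) \<subseteq> UNIV - {0}" using \<rho> by auto
    ultimately show ?thesis using levi_lower[OF _ f1_sm] that by blast
  qed
  have K1all: "- K1 * (norm v)^2 \<le> levi f1 x v" if "x \<in> cball 0 \<rho>" "x \<noteq> 0" for x v
  proof (cases "norm x < \<rho> / 2")
    case True
    have "levi f1 x v = levi ell x v"
    proof (rule levi_local[of "ball 0 (\<rho>/2) - {0}"])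
      show "open (ball (0::complex^'m) (\<rho>/2) - {0})" by auto
      show "x \<in> ball 0 (\<rho>/2) - {0}" using True that by auto
      fix y :: "complex^'m" assume "y \<in> ball 0 (\<rho>/2) - {0}"
      then show "f1 y = ell y" using chi1[of y] by (simp add: f1_def)
    qed
    moreover have "0 \<le> K1 * (norm v)^2" using K1(1) by simp
    ultimately show ?thesis using levi_ell[OF that(2), of v] by linarith
  next
    case False
    then show ?thesis using K1(2) that by auto
  qed
  obtain \<eta> where \<eta>: "\<eta> > 0" "\<And>z. norm z \<le> \<eta> \<Longrightarrow> \<bar>p z\<bar> \<le> norm z"
    using small_o[OF dp0 p0] by blast
  obtain A where A: "0 < A" "A \<le> min (2 * \<eta>) \<rho>" "A * (K1 + K2 * (- ln ((A / (2 * exp 2))^2))) < c"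
    using choose_A[OF c(1), of "min (2 * \<eta>) \<rho>" K1 K2] \<eta> \<rho> by auto
  define s where "s = A / (2 * exp 2)"
  have s: "s > 0" using A by (simp add: s_def)
  have es: "exp 2 * s = A / 2" by (simp add: s_def)
  have e12: "exp 1 * s < exp 2 * s" using s by simp
  have s_small: "s \<le> A / 2" using A by (simp add: s_def field_simps)
  have s1: "s \<le> 1" using s_small A \<rho> by simp
  have lns: "- ln (s^2) \<ge> 0" using s s1 by (simp add: power_le_one)
  define phi where "phi z = p z + A * f1 z + (- A * ln (s^2)) * chi z" for z
  have phi_inner: "phi z = p z + A * (2 * ln (norm z) - 2 * ln s)" if "norm z \<le> \<rho> / 2" "z \<noteq> 0" for z
    using chi1[OF that(1)] that(2) s
    by (simp add: phi_def f1_def ell_def dot_square_norm ln_realpow algebra_simps)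
  have es1: "exp 1 * s > 0" using s by simp
  have ex1: "exp (1::real) > 1" by simp
  have se: "s / exp 1 < s" using s ex1 by (simp add: divide_less_eq)
  have s_e1: "s < exp 1 * s" using s ex1 by simp
  have F1: "phi z \<ge> 3 / 2 * A" if "exp 1 * s < norm z" "norm z \<le> exp 2 * s" for z
  proof -
    have z0: "z \<noteq> 0" using that es1 by auto
    have zr: "norm z \<le> \<rho> / 2" using that(2) es A by simp
    have "ln (exp 1 * s) < ln (norm z)" using that(1) es1 by (intro ln_less_cancel_iff[THEN iffD2]) auto
    then have l: "1 + ln s < ln (norm z)" using s by (simp add: ln_mult)
    have pz: "\<bar>p z\<bar> \<le> norm z" using \<eta>(2) that(2) es A by simp
    have "phi z = p z + A * (2 * ln (norm z) - 2 * ln s)" by (rule phi_inner[OF zr z0])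
    moreover have "A * (2 * ln (norm z) - 2 * ln s) \<ge> A * 2" using l A by (intro mult_left_mono) auto
    moreover have "p z \<ge> - (A / 2)" using pz that(2) es by linarith
    ultimately show ?thesis by linarith
  qed
  have F2: "phi z \<le> - A" if "0 < norm z" "norm z < s / exp 1" for z
  proof -
    have z0: "z \<noteq> 0" using that by auto
    have zs: "norm z < s" using that(2) se by linarith
    have zr: "norm z \<le> \<rho> / 2" using zs s_small A by simp
    have "ln (norm z) < ln (s / exp 1)" using that s by (intro ln_less_cancel_iff[THEN iffD2]) auto
    then have l: "ln (norm z) < ln s - 1" using s by (simp add: ln_div)
    have pz: "p z \<le> norm z" using \<eta>(2)[of z] zs s_small A by simp
    have "phi z = p z + A * (2 * ln (norm z) - 2 * ln s)" by (rule phi_inner[OF zr z0])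
    moreover have "A * (2 * ln (norm z) - 2 * ln s) \<le> A * (-2)" using l A by (intro mult_left_mono) auto
    ultimately show ?thesis using pz zs s_small A(1) by linarith
  qed
  define eps where "eps = A / 4"
  define w where "w = A / 16"
  have eps: "eps > 0" "w > 0" using A by (auto simp: eps_def w_def)
  define R where "R z = eps * exp (2 * tt lam z)" for z
  have R_b: "0 \<le> R z \<and> R z \<le> eps" if "z \<noteq> 0" "norm z \<le> 1" for z
  proof -
    have "tt lam z \<le> 0" by (rule tt_le0[of lam, OF lp that])
    then show ?thesis using eps by (simp add: R_def)
  qed
  define M where "M z = R z + w * nu ((1/w) * phi z + (-1/w) * R z)" for z
  define q where "q z = (if norm z < exp 2 * s then M z else phi z)" for z
  have M_ann: "M z = phi z" if "exp 1 * s < norm z" "norm z < exp 2 * s" for z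
  proof -
    have z0: "z \<noteq> 0" using that es1 by auto
    have "norm z \<le> 1" using that(2) es A \<rho> by simp
    then have "R z \<le> eps" using R_b[OF z0] by blast
    moreover have "phi z \<ge> 3/2 * A" using F1 that by simp
    ultimately have "(1/w) * phi z + (-1/w) * R z \<ge> 4" using eps by (simp add: w_def eps_def field_simps)
    then have "nu ((1/w) * phi z + (-1/w) * R z) = (1/w) * phi z + (-1/w) * R z" by (rule nu_id)
    then show ?thesis using eps by (simp add: M_def field_simps)
  qed
  have M_0: "M z = R z" if "0 < norm z" "norm z < s / exp 1" for z
  proof -
    have z0: "z \<noteq> 0" using that by auto
    have "norm z \<le> 1" using that(2) se s1 by linarith
    then have "R z \<ge> 0" using R_b[OF z0] by blast
    moreover have "phi z \<le> - A" using F2 that by simp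
    ultimately have "(1/w) * phi z + (-1/w) * R z \<le> -4" using eps by (simp add: w_def eps_def field_simps)
    then have "nu ((1/w) * phi z + (-1/w) * R z) = 0" by (rule nu_zero)
    then show ?thesis by (simp add: M_def)
  qed
  let ?W = "U - {0::complex^'m}"
  have W: "open ?W" using U by auto
  have phi_sm: "smooth_on ?W phi"
  proof -
    have a: "smooth_on ?W p" by (rule smooth_subset[OF p_smooth]) auto
    have b: "smooth_on ?W f1" by (rule smooth_subset[OF f1_sm]) auto
    have d: "smooth_on ?W chi" by (rule smooth_subset[OF chi_sm]) auto
    show ?thesis unfolding phi_def[abs_def]
      by (intro smooth_add smooth_cmult W a b d)
  qed
  have R_sm: "smooth_on (UNIV - {0}) R"
    unfolding R_def[abs_def] by (rule smooth_cmult[OF _ smooth_r2[of lam, OF lp]]) auto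
  define V1 where "V1 = ball (0::complex^'m) (exp 2 * s) - {0}"
  have bc: "ball (0::complex^'m) (exp 2 * s) \<subseteq> cball 0 \<rho>"
  proof
    fix x :: "complex^'m" assume "x \<in> ball 0 (exp 2 * s)"
    then have "norm x < A / 2" using es by simp
    then show "x \<in> cball 0 \<rho>" using A by simp
  qed
  have V1: "open V1" "V1 \<subseteq> ?W" using cbU bc by (auto simp: V1_def)
  have M_sm: "smooth_on V1 M"
  proof -
    have a: "smooth_on V1 phi" by (rule smooth_subset[OF phi_sm V1(2)])
    have b: "smooth_on V1 R" by (rule smooth_subset[OF R_sm]) (use V1 in auto)
    show ?thesis unfolding M_def[abs_def]
      by (intro smooth_add smooth_cmult smooth_nu_comp V1(1) a b)
  qed
  define V2 where "V2 = U - cball (0::complex^'m) (exp 1 * s)"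
  have V2: "open V2" "V2 \<subseteq> ?W" using U s by (auto simp: V2_def)
  have q_V2: "q y = phi y" if "y \<in> V2" for y
  proof (cases "norm y < exp 2 * s")
    case True
    then show ?thesis using M_ann[of y] that by (simp add: q_def V2_def)
  next
    case False then show ?thesis by (simp add: q_def)
  qed
  have q_V1: "q y = M y" if "y \<in> V1" for y using that by (simp add: q_def V1_def)
  have q_sm: "smooth_on ?W q"
  proof (rule smooth_local[OF W])
    fix x assume x: "x \<in> ?W"
    show "\<exists>V g. open V \<and> x \<in> V \<and> smooth_on V g \<and> (\<forall>y\<in>V. q y = g y)"
    proof (cases "norm x < exp 2 * s")
      case True
      then have "x \<in> V1" using x by (simp add: V1_def)
      then show ?thesis using V1 M_sm q_V1 by blast
    next
      case False
      then have "x \<in> V2" using x e12 by (simp add: V2_def)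
      moreover have "smooth_on V2 phi" by (rule smooth_subset[OF phi_sm V2(2)])
      ultimately show ?thesis using V2 q_V2 by blast
    qed
  qed
  have phi_pos: "levi phi x v > 0" if x: "x \<in> ?W" and v: "v \<noteq> 0" for x v
  proof (cases "norm x \<le> \<rho>")
    case True
    have a: "smooth_on ?W p" by (rule smooth_subset[OF p_smooth]) auto
    have b: "smooth_on ?W f1" by (rule smooth_subset[OF f1_sm]) auto
    have d: "smooth_on ?W chi" by (rule smooth_subset[OF chi_sm]) auto
    have "levi phi x v = levi (\<lambda>y. (p y + A * f1 y) + (- A * ln (s^2)) * chi y) x v"
      unfolding phi_def[abs_def] by simp
    also have "\<dots> = levi (\<lambda>y. p y + A * f1 y) x v + levi (\<lambda>y. (- A * ln (s^2)) * chi y) x v"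
      by (rule levi_add[OF W x smooth_add[OF W a smooth_cmult[OF W b]] smooth_cmult[OF W d]])
    also have "\<dots> = levi p x v + A * levi f1 x v + (- A * ln (s^2)) * levi chi x v"
      by (simp only: levi_add[OF W x a smooth_cmult[OF W b]] levi_cmult[OF W x b] levi_cmult[OF W x d])
    finally have "levi phi x v = levi p x v + A * levi f1 x v + (- A * ln (s^2)) * levi chi x v" .
    moreover have "c * (norm v)^2 \<le> levi p x v" using c(2) True by auto
    moreover have "A * (- K1 * (norm v)^2) \<le> A * levi f1 x v"
      using K1all[of x v] True x A by (intro mult_left_mono) auto
    moreover have "(- A * ln (s^2)) * (- K2 * (norm v)^2) \<le> (- A * ln (s^2)) * levi chi x v"
    proof (rule mult_left_mono)
      show "- K2 * (norm v)^2 \<le> levi chi x v" using K2(2) True by auto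
      have "A * ln (s^2) \<le> 0" by (rule mult_nonneg_nonpos) (use A(1) lns in auto)
      then show "0 \<le> - A * ln (s^2)" by simp
    qed
    moreover have "0 < (c - A * (K1 + K2 * (- ln (s^2)))) * (norm v)^2"
      using A(3) v by (simp add: s_def)
    ultimately show ?thesis by (simp add: algebra_simps)
  next
    case False
    let ?V3 = "U - cball (0::complex^'m) \<rho>"
    have "levi phi x v = levi p x v"
    proof (rule levi_local[of ?V3])
      show "open ?V3" using U by auto
      show "x \<in> ?V3" using x False by auto
      fix y assume "y \<in> ?V3"
      then show "phi y = p y" using chi0[of y] by (simp add: phi_def f1_def)
    qed
    then show ?thesis using p_psh x v by (simp add: strictly_psh_on_levi)
  qed
  have R_pos: "levi R x v > 0" if "x \<noteq> 0" "v \<noteq> 0" for x v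
  proof -
    have "levi R x v = eps * levi (\<lambda>z. exp (2 * tt lam z)) x v"
    proof -
      have o: "open (UNIV - {0::complex^'m})" by auto
      show ?thesis unfolding R_def[abs_def]
        by (rule levi_cmult[OF o _ smooth_r2[of lam, OF lp]]) (use that in auto)
    qed
    then show ?thesis using levi_r2_pos[of lam, OF lp that] eps by simp
  qed
  have q_psh: "strictly_psh_on ?W q"
    unfolding strictly_psh_on_levi
  proof (intro ballI allI impI)
    fix x v :: "complex^'m" assume x: "x \<in> ?W" and v: "v \<noteq> 0"
    show "levi q x v > 0"
    proof (cases "norm x < exp 2 * s")
      case True
      then have xV: "x \<in> V1" using x by (simp add: V1_def)
      have "levi q x v = levi M x v" by (rule levi_local[OF V1(1) xV q_V1])
      also have "levi M x v > 0"
        unfolding M_def[abs_def]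
        by (rule levi_Mx[OF V1(1) xV smooth_subset[OF phi_sm V1(2)] smooth_subset[OF R_sm] eps(2)
              phi_pos[OF x v] R_pos[OF _ v]]) (use V1 x in auto)
      finally show ?thesis .
    next
      case False
      then have xV: "x \<in> V2" using x e12 by (simp add: V2_def)
      have "levi q x v = levi phi x v" by (rule levi_local[OF V2(1) xV q_V2])
      then show ?thesis using phi_pos[OF x v] by simp
    qed
  qed
  have KN: "\<exists>K N. compact K \<and> K \<subseteq> U \<and> 0 \<in> interior K \<and>
                  (\<forall>z\<in>U - K. q z = p z) \<and>
                  open N \<and> 0 \<in> N \<and> N \<subseteq> K \<and>
                  (\<forall>z\<in>N - {0}. q z = eps * (r_lambda lam z)\<^sup>2)"
  proof (rule exI[of _ "cball (0::complex^'m) \<rho>"], rule exI[of _ "ball (0::complex^'m) (s / exp 1)"], intro conjI)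
    show "compact (cball (0::complex^'m) \<rho>)" by simp
    show "cball 0 \<rho> \<subseteq> U" by (rule cbU)
    show "0 \<in> interior (cball (0::complex^'m) \<rho>)" using \<rho> by simp
    show "\<forall>z\<in>U - cball (0::complex^'m) \<rho>. q z = p z"
    proof
      fix z :: "complex^'m" assume z: "z \<in> U - cball 0 \<rho>"
      then have "\<not> norm z < exp 2 * s" using es A by auto
      then show "q z = p z" using chi0[of z] z by (simp add: q_def phi_def f1_def)
    qed
    show "open (ball (0::complex^'m) (s / exp 1))" by simp
    show "0 \<in> ball (0::complex^'m) (s / exp 1)" using s by simp
    show "ball 0 (s / exp 1) \<subseteq> cball (0::complex^'m) \<rho>"
    proof -
      have "s / exp 1 \<le> \<rho>" using se s_small A by linarith
      then show ?thesis by auto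
    qed
    show "\<forall>z\<in>ball (0::complex^'m) (s / exp 1) - {0}. q z = eps * (r_lambda lam z)\<^sup>2"
    proof
      fix z :: "complex^'m" assume z: "z \<in> ball 0 (s / exp 1) - {0}"
      then have n: "0 < norm z" "norm z < s / exp 1" by auto
      have "norm z < exp 2 * s" using n se s_e1 e12 by linarith
      then have "q z = R z" using M_0[OF n] by (simp add: q_def)
      then show "q z = eps * (r_lambda lam z)\<^sup>2" using r_lambda_sq[of lam, OF lp] z by (simp add: R_def)
    qed
  qed
  show ?thesis by (intro exI[of _ eps] conjI exI[of _ q] eps(1) q_sm q_psh KN)
qed

end
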